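(* Let $A\in\mathbb{R}^{n\times n}$ be Metzler and let $E\in\mathbb{R}^{n\times q}$, $C\in\mathbb{R}^{q\times n}$, $F\in\mathbb{R}^{q\times q}$ be entrywise nonnegative. Let $q=q_1+\dots+q_N$ and $$\boldsymbol{\Delta}^{2}:=\{\Delta=\mathrm{diag}(\Delta_1,\ldots,\Delta_N):\ \Delta_i\in\mathbb{C}^{q_i\times q_i},\ \|\Delta_i\|_2\le 1\},\qquad \mathcal{D}_\Delta:=\{\mathrm{diag}(d_1I_{q_1},\ldots,d_NI_{q_N}):\ d_i>0\}.$$ Consider the uncertain system $\dot x=Ax+Ew$, $z=Cx+Fw$, $w=\Delta z$. The following statements are equivalent: (i) The uncertain system is asymptotically stable for all $\Delta\in\boldsymbol{\Delta}^{2}$. (ii) There exist $\lambda,\mu\in\mathbb{R}^n_{>0}$, $\nu\in\mathbb{R}^q_{>0}$ and $D\in\mathcal{D}_\Delta$ such that $A\lambda+E\nu<0$ and $$\begin{bmatrix}\lambda\\ \nu\end{bmatrix}^T\begin{bmatrix}C^TDC & C^TDF\\ F^TDC & F^TDF-D\end{bmatrix}+\mu^T\begin{bmatrix}A & E\end{bmatrix}<0 .$$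
   Context: A real matrix is Metzler if all its off-diagonal entries are nonnegative. $\|\cdot\|_2$ is the matrix norm induced by the Euclidean vector norm. Vector inequalities are componentwise. The uncertain system is asymptotically stable for a given $\Delta$ if $I-F\Delta$ is invertible and $A+E\Delta(I-F\Delta)^{-1}C$ is Hurwitz stable. *)

theory Defs
  imports "HOL-Analysis.Analysis"
begin

definition metzler :: "real^'n^'n \<Rightarrow> bool" where
  "metzler A \<longleftrightarrow> (\<forall>i j. i \<noteq> j \<longrightarrow> 0 \<le> A $ i $ j)"

definition nonneg_mat :: "real^'m^'n \<Rightarrow> bool" where
  "nonneg_mat M \<longleftrightarrow> (\<forall>i j. 0 \<le> M $ i $ j)"

definition pos_vec :: "real^'n \<Rightarrow> bool" where
  "pos_vec v \<longleftrightarrow> (\<forall>i. 0 < v $ i)"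

definition neg_vec :: "real^'n \<Rightarrow> bool" where
  "neg_vec v \<longleftrightarrow> (\<forall>i. v $ i < 0)"

definition cmat :: "real^'m^'n \<Rightarrow> complex^'m^'n" where
  "cmat M = (\<chi> i j. complex_of_real (M $ i $ j))"

definition hurwitz :: "complex^'n^'n \<Rightarrow> bool" where
  "hurwitz M \<longleftrightarrow> (\<forall>l v. v \<noteq> 0 \<and> M *v v = l *s v \<longrightarrow> Re l < 0)"

text \<open>The block structure q = q_1 + ... + q_N is encoded by a map blk
  assigning to each index of the q-dimensional space its block.\<close>
definition Delta2 :: "('q \<Rightarrow> 'b) \<Rightarrow> (complex^'q^'q) set" where
  "Delta2 blk = {\<Delta>. (\<forall>j k. blk j \<noteq> blk k \<longrightarrow> \<Delta> $ j $ k = 0) \<and>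
     (\<forall>b x. (\<forall>j. blk j \<noteq> b \<longrightarrow> x $ j = 0) \<longrightarrow> norm (\<Delta> *v x) \<le> norm x)}"

definition D_Delta :: "('q \<Rightarrow> 'b) \<Rightarrow> (real^'q^'q) set" where
  "D_Delta blk = {D. \<exists>d::'b \<Rightarrow> real. (\<forall>b. 0 < d b) \<and>
      D = (\<chi> i j. if i = j then d (blk i) else 0)}"

definition robustly_stable ::
  "('q \<Rightarrow> 'b) \<Rightarrow> real^'n^'n \<Rightarrow> real^'q^'n \<Rightarrow> real^'n^'q \<Rightarrow> real^'q^'q \<Rightarrow> bool" where
  "robustly_stable blk A E C F \<longleftrightarrow>
     (\<forall>\<Delta> \<in> Delta2 blk.
        invertible (mat 1 - cmat F ** \<Delta>) \<and>
        hurwitz (cmat A + cmat E ** \<Delta> ** matrix_inv (mat 1 - cmat F ** \<Delta>) ** cmat C))"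

end

theory Submission
  imports Defs
begin

lemma pair_cs:
  fixes a b AA B a' b' :: real
  assumes "a\<^sup>2 \<le> AA*a'" "b\<^sup>2 \<le> B*b'" "0\<le>AA" "0\<le>B" "0\<le>a'" "0\<le>b'"
  shows "(a+b)\<^sup>2 \<le> (AA+B)*(a'+b')"
proof -
  have "(a*b)\<^sup>2 \<le> (AA*a')*(B*b')"
    using assms by (simp add: power_mult_distrib mult_mono')
  also have "\<dots> = (AA*b')*(B*a')" by (simp add: algebra_simps)
  finally have h: "(2*a*b)\<^sup>2 \<le> 4*((AA*b')*(B*a'))" by (simp add: power_mult_distrib)
  have "4*((AA*b')*(B*a')) \<le> (AA*b' + B*a')\<^sup>2"
    using sum_squares_ge_zero[of "AA*b' - B*a'" 0] by (simp add: power2_eq_square algebra_simps)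
  with h have "(2*a*b)\<^sup>2 \<le> (AA*b' + B*a')\<^sup>2" by linarith
  hence "\<bar>2*a*b\<bar> \<le> \<bar>AA*b' + B*a'\<bar>" using abs_le_square_iff by blast
  moreover have "0 \<le> AA*b' + B*a'" using assms by simp
  ultimately have "2*a*b \<le> AA*b' + B*a'" by linarith
  thus ?thesis using assms by (simp add: power2_sum algebra_simps)
qed

lemma wcs:
  fixes c l x :: "'a \<Rightarrow> real"
  assumes "finite I" "\<And>i. i\<in>I \<Longrightarrow> 0 \<le> c i" "\<And>i. i\<in>I \<Longrightarrow> 0 < l i"
  shows "(\<Sum>i\<in>I. c i * x i)\<^sup>2 \<le> (\<Sum>i\<in>I. c i * l i) * (\<Sum>i\<in>I. c i * ((x i)\<^sup>2 / l i))"
  using assms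
proof (induction I rule: finite_induct)
  case empty
  then show ?case by simp
next
  case (insert i F)
  have ih: "(\<Sum>i\<in>F. c i * x i)\<^sup>2 \<le> (\<Sum>i\<in>F. c i * l i) * (\<Sum>i\<in>F. c i * ((x i)\<^sup>2 / l i))"
    using insert by auto
  have ci: "0 \<le> c i" "0 < l i" using insert by auto
  have t: "(c i * x i)\<^sup>2 \<le> (c i * l i) * (c i * ((x i)\<^sup>2 / l i))"
    using ci by (simp add: power2_eq_square field_simps)
  have n1: "0 \<le> (\<Sum>i\<in>F. c i * l i)" "0 \<le> (\<Sum>i\<in>F. c i * ((x i)\<^sup>2 / l i))"
    using insert(4,5) by (auto intro!: sum_nonneg mult_nonneg_nonneg divide_nonneg_nonneg simp: less_imp_le)
  have "(c i * x i + (\<Sum>i\<in>F. c i * x i))\<^sup>2 \<le> (c i * l i + (\<Sum>i\<in>F. c i * l i)) * (c i * ((x i)\<^sup>2 / l i) + (\<Sum>i\<in>F. c i * ((x i)\<^sup>2 / l i)))"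
    by (rule pair_cs[OF t ih]) (use ci n1 in auto)
  then show ?case using insert(1,2) by simp
qed

lemma core:
  fixes A :: "real^'n^'n" and E :: "real^'q^'n" and C :: "real^'n^'q" and F :: "real^'q^'q"
    and d :: "'q \<Rightarrow> real" and lam mu x :: "real^'n" and nu om :: "real^'q"
  assumes mA: "metzler A" and nE: "nonneg_mat E" and nC: "nonneg_mat C" and nF: "nonneg_mat F"
   and dpos: "\<And>k. 0 < d k" and lp: "pos_vec lam" and mp: "pos_vec mu" and np: "pos_vec nu"
   and c1: "neg_vec (A *v lam + E *v nu)"
   and c2: "\<And>u z. \<forall>i. 0 \<le> u$i \<Longrightarrow> \<forall>k. 0 \<le> z$k \<Longrightarrow> u \<noteq> 0 \<or> z \<noteq> 0 \<Longrightarrow>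
        (\<Sum>k\<in>UNIV. d k * (C *v lam + F *v nu)$k * (C *v u + F *v z)$k) - (\<Sum>k\<in>UNIV. d k * nu$k * z$k)
         + (\<Sum>i\<in>UNIV. mu$i * (A *v u + E *v z)$i) < 0"
   and xn: "\<forall>i. 0 \<le> x$i" and on: "\<forall>k. 0 \<le> om$k" and nz: "x \<noteq> 0 \<or> om \<noteq> 0"
   and f1: "\<forall>i. 0 \<le> (A *v x + E *v om)$i"
   and f2: "(\<Sum>k\<in>UNIV. d k * (om$k)\<^sup>2) \<le> (\<Sum>k\<in>UNIV. d k * ((C *v x + F *v om)$k)\<^sup>2)"
  shows False
proof -
  define xt where "xt = (\<chi> i. (x$i)\<^sup>2/lam$i)"
  define wt where "wt = (\<chi> i. (om$i)\<^sup>2/nu$i)"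
  have lp': "\<And>i. 0 < lam$i" using lp by (simp add: pos_vec_def)
  have np': "\<And>i. 0 < nu$i" using np by (simp add: pos_vec_def)
  have mp': "\<And>i. 0 < mu$i" using mp by (simp add: pos_vec_def)
  have xtn: "\<forall>i. 0 \<le> xt$i" using lp' by (simp add: xt_def less_imp_le)
  have wtn: "\<forall>i. 0 \<le> wt$i" using np' by (simp add: wt_def less_imp_le)
  have ntz: "xt \<noteq> 0 \<or> wt \<noteq> 0"
  proof (cases "x = 0")
    case True
    then obtain k where "om$k \<noteq> 0" using nz by (auto simp: vec_eq_iff)
    hence "wt$k \<noteq> 0" using np'[of k] by (simp add: wt_def)
    thus ?thesis by auto
  next
    case False
    then obtain k where "x$k \<noteq> 0" by (auto simp: vec_eq_iff)
    hence "xt$k \<noteq> 0" using lp'[of k] by (simp add: xt_def)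
    thus ?thesis by auto
  qed
  have F3: "((C *v x + F *v om)$k)\<^sup>2 \<le> (C *v lam + F *v nu)$k * (C *v xt + F *v wt)$k" for k
  proof -
    have s1: "(\<Sum>i\<in>UNIV. C$k$i * x$i)\<^sup>2 \<le> (\<Sum>i\<in>UNIV. C$k$i * lam$i) * (\<Sum>i\<in>UNIV. C$k$i * ((x$i)\<^sup>2 / lam$i))"
      by (rule wcs) (use nC lp' in \<open>auto simp: nonneg_mat_def\<close>)
    have s2: "(\<Sum>i\<in>UNIV. F$k$i * om$i)\<^sup>2 \<le> (\<Sum>i\<in>UNIV. F$k$i * nu$i) * (\<Sum>i\<in>UNIV. F$k$i * ((om$i)\<^sup>2 / nu$i))"
      by (rule wcs) (use nF np' in \<open>auto simp: nonneg_mat_def\<close>)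
    have n: "0 \<le> (\<Sum>i\<in>UNIV. C$k$i * lam$i)" "0 \<le> (\<Sum>i\<in>UNIV. F$k$i * nu$i)"
       "0 \<le> (\<Sum>i\<in>UNIV. C$k$i * ((x$i)\<^sup>2 / lam$i))" "0 \<le> (\<Sum>i\<in>UNIV. F$k$i * ((om$i)\<^sup>2 / nu$i))"
      using nC nF lp' np' by (auto simp: nonneg_mat_def less_imp_le intro!: sum_nonneg)
    from pair_cs[OF s1 s2 n]
    show ?thesis by (simp add: matrix_vector_mult_def xt_def wt_def)
  qed
  have F4: "0 \<le> (A *v xt + E *v wt)$i" for i
  proof -
    let ?J = "UNIV - {i}"
    define T where "T = (\<Sum>j\<in>?J. A$i$j * x$j) + (\<Sum>k\<in>UNIV. E$i$k * om$k)"
    define R where "R = (\<Sum>j\<in>?J. A$i$j * lam$j) + (\<Sum>k\<in>UNIV. E$i$k * nu$k)"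
    define S where "S = (\<Sum>j\<in>?J. A$i$j * ((x$j)\<^sup>2/lam$j)) + (\<Sum>k\<in>UNIV. E$i$k * ((om$k)\<^sup>2/nu$k))"
    have Aoff: "\<And>j. j \<in> ?J \<Longrightarrow> 0 \<le> A$i$j" using mA by (auto simp: metzler_def)
    have split: "\<And>v::real^'n. (\<Sum>j\<in>UNIV. A$i$j * v$j) = A$i$i * v$i + (\<Sum>j\<in>?J. A$i$j * v$j)"
      by (simp add: sum.remove[of UNIV i])
    have eT: "(A *v x + E *v om)$i = A$i$i * x$i + T"
      by (simp add: matrix_vector_mult_def T_def split)
    have eR: "(A *v lam + E *v nu)$i = A$i$i * lam$i + R"
      by (simp add: matrix_vector_mult_def R_def split)
    have "(A *v xt + E *v wt)$i = A$i$i * xt$i + ((\<Sum>j\<in>?J. A$i$j * xt$j) + (\<Sum>k\<in>UNIV. E$i$k * wt$k))"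
      by (simp add: matrix_vector_mult_def split)
    also have "\<dots> = A$i$i * xt$i + S" by (simp add: S_def xt_def wt_def)
    finally have eS: "(A *v xt + E *v wt)$i = A$i$i * xt$i + S" .
    have s1: "(\<Sum>j\<in>?J. A$i$j * x$j)\<^sup>2 \<le> (\<Sum>j\<in>?J. A$i$j * lam$j) * (\<Sum>j\<in>?J. A$i$j * ((x$j)\<^sup>2/lam$j))"
      by (rule wcs) (use Aoff lp' in auto)
    have s2: "(\<Sum>k\<in>UNIV. E$i$k * om$k)\<^sup>2 \<le> (\<Sum>k\<in>UNIV. E$i$k * nu$k) * (\<Sum>k\<in>UNIV. E$i$k * ((om$k)\<^sup>2/nu$k))"
      by (rule wcs) (use nE np' in \<open>auto simp: nonneg_mat_def\<close>)
    have n: "0 \<le> (\<Sum>j\<in>?J. A$i$j * lam$j)" "0 \<le> (\<Sum>k\<in>UNIV. E$i$k * nu$k)"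
       "0 \<le> (\<Sum>j\<in>?J. A$i$j * ((x$j)\<^sup>2/lam$j))" "0 \<le> (\<Sum>k\<in>UNIV. E$i$k * ((om$k)\<^sup>2/nu$k))"
      using Aoff nE lp' np' by (auto simp: nonneg_mat_def less_imp_le intro!: sum_nonneg mult_nonneg_nonneg divide_nonneg_nonneg)
    have TRS: "T\<^sup>2 \<le> R * S" unfolding T_def R_def S_def by (rule pair_cs[OF s1 s2 n])
    have R0: "0 \<le> R" "0 \<le> S" unfolding R_def S_def using n by auto
    have "A$i$i * lam$i + R < 0" using c1 eR unfolding neg_vec_def by metis
    hence Rle: "R \<le> - A$i$i * lam$i" and "A$i$i * lam$i < 0" using R0 by auto
    hence aneg: "A$i$i < 0" using lp'[of i] by (simp add: mult_less_0_iff)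
    have "0 \<le> A$i$i * x$i + T" using f1 eT by metis
    hence "0 \<le> - A$i$i * x$i" "- A$i$i * x$i \<le> T" using aneg xn by (auto simp: mult_nonpos_nonneg)
    hence "(- A$i$i * x$i)\<^sup>2 \<le> T\<^sup>2" by (intro power_mono) auto
    also have "\<dots> \<le> R * S" by (rule TRS)
    also have "\<dots> \<le> (- A$i$i * lam$i) * S" using mult_right_mono[OF Rle R0(2)] by simp
    finally have "(- A$i$i) * ((- A$i$i) * (x$i)\<^sup>2) \<le> (- A$i$i) * (lam$i * S)"
      by (simp add: power2_eq_square algebra_simps)
    hence "(- A$i$i) * (x$i)\<^sup>2 \<le> lam$i * S"
      using aneg by (metis mult_le_cancel_left_pos neg_0_less_iff_less)
    hence "(- A$i$i) * ((x$i)\<^sup>2 / lam$i) \<le> S" using lp'[of i] by (simp add: field_simps)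
    thus ?thesis using eS by (simp add: xt_def)
  qed
  have key: "(\<Sum>k\<in>UNIV. d k * (C *v lam + F *v nu)$k * (C *v xt + F *v wt)$k) - (\<Sum>k\<in>UNIV. d k * nu$k * wt$k)
         + (\<Sum>i\<in>UNIV. mu$i * (A *v xt + E *v wt)$i) < 0"
    by (rule c2[OF xtn wtn ntz])
  have e1: "(\<Sum>k\<in>UNIV. d k * nu$k * wt$k) = (\<Sum>k\<in>UNIV. d k * (om$k)\<^sup>2)"
    using np' by (intro sum.cong) (auto simp: wt_def less_imp_neq[symmetric])
  have e2: "0 \<le> (\<Sum>i\<in>UNIV. mu$i * (A *v xt + E *v wt)$i)"
    using mp' F4 by (auto intro!: sum_nonneg simp: less_imp_le)
  have e3: "(\<Sum>k\<in>UNIV. d k * ((C *v x + F *v om)$k)\<^sup>2) \<le> (\<Sum>k\<in>UNIV. d k * (C *v lam + F *v nu)$k * (C *v xt + F *v wt)$k)"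
    using F3 dpos by (auto intro!: sum_mono simp: mult.assoc less_imp_le mult_left_mono)
  show False using key e1 e2 e3 f2 by linarith
qed

lemma inner_transpose_mv: "inner x (transpose M *v y) = inner (M *v x) (y::real^_)"
  by (metis dot_lmul_matrix inner_commute transpose_matrix_vector)

lemma diag_mv: "(\<chi> i j. if i = j then dd i else 0) *v (v::real^'q) = (\<chi> k. dd k * v$k)"
proof -
  have "\<And>i. (\<Sum>j\<in>UNIV. (if i = j then dd i else 0) * v$j) = dd i * v$i"
  proof -
    fix i
    have "(\<Sum>j\<in>UNIV. (if i = j then dd i else 0) * v$j) = (\<Sum>j\<in>UNIV. if i = j then dd i * v$j else 0)"
      by (rule sum.cong) auto
    thus "(\<Sum>j\<in>UNIV. (if i = j then dd i else 0) * v$j) = dd i * v$i" by simp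
  qed
  thus ?thesis by (simp add: matrix_vector_mult_def vec_eq_iff)
qed

lemma neg_pos_inner:
  fixes r :: "real^'n" and u :: "real^'n"
  assumes "neg_vec r" "\<forall>i. 0 \<le> u$i"
  shows "inner r u \<le> 0" "u \<noteq> 0 \<Longrightarrow> inner r u < 0"
proof -
  have t: "\<And>i. r$i * u$i \<le> 0" using assms by (auto simp: neg_vec_def mult_nonpos_nonneg less_imp_le)
  show "inner r u \<le> 0" unfolding inner_vec_def inner_real_def using t by (auto intro: sum_nonpos)
  assume "u \<noteq> 0"
  then obtain k where k: "u$k \<noteq> 0" by (auto simp: vec_eq_iff)
  hence "r$k * u$k < 0" using assms by (auto simp: neg_vec_def mult_neg_pos order.not_eq_order_implies_strict)
  thus "inner r u < 0" unfolding inner_vec_def inner_real_def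
    using sum_strict_mono_ex1[of UNIV "\<lambda>i. r$i * u$i" "\<lambda>_. 0"] t by auto
qed

lemma cert_c2:
  fixes A :: "real^'n^'n" and E :: "real^'q^'n" and C :: "real^'n^'q" and F :: "real^'q^'q"
    and dd :: "'q \<Rightarrow> real" and lam mu u :: "real^'n" and nu z :: "real^'q"
  defines "D \<equiv> (\<chi> i j. if i = j then dd i else 0) :: real^'q^'q"
  assumes r1: "neg_vec (lam v* (transpose C ** D ** C) + nu v* (transpose F ** D ** C) + mu v* A)"
    and r2: "neg_vec (lam v* (transpose C ** D ** F) + nu v* (transpose F ** D ** F - D) + mu v* E)"
    and un: "\<forall>i. 0 \<le> u$i" and zn: "\<forall>k. 0 \<le> z$k" and nz: "u \<noteq> 0 \<or> z \<noteq> 0"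
  shows "(\<Sum>k\<in>UNIV. dd k * (C *v lam + F *v nu)$k * (C *v u + F *v z)$k) - (\<Sum>k\<in>UNIV. dd k * nu$k * z$k)
         + (\<Sum>i\<in>UNIV. mu$i * (A *v u + E *v z)$i) < 0"
proof -
  let ?r1 = "lam v* (transpose C ** D ** C) + nu v* (transpose F ** D ** C) + mu v* A"
  let ?r2 = "lam v* (transpose C ** D ** F) + nu v* (transpose F ** D ** F - D) + mu v* E"
  have "inner ?r1 u + inner ?r2 z < 0"
  proof (cases "u = 0")
    case True
    then show ?thesis using neg_pos_inner[OF r2 zn] nz by simp
  next
    case False
    then show ?thesis using neg_pos_inner[OF r1 un] neg_pos_inner(1)[OF r2 zn] by linarith
  qed
  moreover have "inner ?r1 u + inner ?r2 z = inner (C *v lam + F *v nu) (D *v (C *v u + F *v z))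
      - inner nu (D *v z) + inner mu (A *v u + E *v z)"
    by (simp add: dot_lmul_matrix inner_add_left inner_add_right inner_diff_left inner_diff_right
        matrix_vector_mul_assoc[symmetric] inner_transpose_mv matrix_vector_mult_diff_rdistrib
        matrix_vector_right_distrib del: transpose_matrix_vector)
  moreover have "inner (C *v lam + F *v nu) (D *v (C *v u + F *v z)) = (\<Sum>k\<in>UNIV. dd k * (C *v lam + F *v nu)$k * (C *v u + F *v z)$k)"
    unfolding D_def diag_mv inner_vec_def inner_real_def by (simp add: algebra_simps)
  moreover have "inner nu (D *v z) = (\<Sum>k\<in>UNIV. dd k * nu$k * z$k)"
    unfolding D_def diag_mv inner_vec_def inner_real_def by (simp add: algebra_simps)
  moreover have "inner mu (A *v u + E *v z) = (\<Sum>i\<in>UNIV. mu$i * (A *v u + E *v z)$i)"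
    unfolding inner_vec_def inner_real_def by simp
  ultimately show ?thesis by linarith
qed

lemma cmat_nth [simp]: "cmat M $ i $ j = complex_of_real (M $ i $ j)"
  by (simp add: cmat_def)

lemma cmat_mv_nth: "(cmat M *v v) $ i = (\<Sum>j\<in>UNIV. complex_of_real (M$i$j) * v$j)"
  by (simp add: matrix_vector_mult_def)

lemma fact1:
  fixes A :: "real^'n^'n" and E :: "real^'q^'n" and v :: "complex^'n" and w :: "complex^'q"
  assumes mA: "metzler A" and nE: "nonneg_mat E" and l: "0 \<le> Re l"
    and eq: "l *s v = cmat A *v v + cmat E *v w"
  shows "0 \<le> (A *v (\<chi> i. cmod (v$i)) + E *v (\<chi> k. cmod (w$k)))$i"
proof -
  let ?J = "UNIV - {i}"
  define T where "T = (\<Sum>j\<in>?J. A$i$j * cmod (v$j)) + (\<Sum>k\<in>UNIV. E$i$k * cmod (w$k))"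
  have Aoff: "\<And>j. j \<in> ?J \<Longrightarrow> 0 \<le> A$i$j" using mA by (auto simp: metzler_def)
  have e1: "(A *v (\<chi> i. cmod (v$i)) + E *v (\<chi> k. cmod (w$k)))$i = A$i$i * cmod (v$i) + T"
    by (simp add: matrix_vector_mult_def T_def sum.remove[of UNIV i])
  have "l * v$i = (\<Sum>j\<in>UNIV. complex_of_real (A$i$j) * v$j) + (\<Sum>k\<in>UNIV. complex_of_real (E$i$k) * w$k)"
    using arg_cong[OF eq, of "\<lambda>x. x$i"] by (simp add: cmat_mv_nth)
  also have "(\<Sum>j\<in>UNIV. complex_of_real (A$i$j) * v$j) = complex_of_real (A$i$i) * v$i + (\<Sum>j\<in>?J. complex_of_real (A$i$j) * v$j)"
    by (simp add: sum.remove[of UNIV i])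
  finally have eqn: "(l - complex_of_real (A$i$i)) * v$i = (\<Sum>j\<in>?J. complex_of_real (A$i$j) * v$j) + (\<Sum>k\<in>UNIV. complex_of_real (E$i$k) * w$k)"
    by (simp add: algebra_simps)
  have "cmod ((l - complex_of_real (A$i$i)) * v$i) \<le> (\<Sum>j\<in>?J. cmod (complex_of_real (A$i$j) * v$j)) + (\<Sum>k\<in>UNIV. cmod (complex_of_real (E$i$k) * w$k))"
    unfolding eqn by (intro norm_triangle_le add_mono norm_sum)
  also have "\<dots> = T" unfolding T_def
    using Aoff nE by (intro arg_cong2[where f="(+)"] sum.cong) (auto simp: nonneg_mat_def norm_mult)
  finally have h: "cmod (l - complex_of_real (A$i$i)) * cmod (v$i) \<le> T" by (simp add: norm_mult)
  have "- A$i$i \<le> cmod (l - complex_of_real (A$i$i))"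
    using complex_Re_le_cmod[of "l - complex_of_real (A$i$i)"] l by simp
  hence "(- A$i$i) * cmod (v$i) \<le> cmod (l - complex_of_real (A$i$i)) * cmod (v$i)"
    by (rule mult_right_mono) simp
  with h e1 show ?thesis by linarith
qed

lemma group_blk:
  fixes blk :: "'a::finite \<Rightarrow> 'b" and f :: "'a \<Rightarrow> real" and g :: "'b \<Rightarrow> real"
  shows "(\<Sum>k\<in>UNIV. g (blk k) * f k) = (\<Sum>b\<in>blk`UNIV. g b * (\<Sum>k\<in>UNIV. if blk k = b then f k else 0))"
proof -
  have "(\<Sum>b\<in>blk`UNIV. g b * (\<Sum>k\<in>UNIV. if blk k = b then f k else 0))
      = (\<Sum>b\<in>blk`UNIV. \<Sum>k\<in>UNIV. if blk k = b then g b * f k else 0)"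
    by (simp add: sum_distrib_left if_distrib cong: if_cong)
  also have "\<dots> = (\<Sum>k\<in>UNIV. \<Sum>b\<in>blk`UNIV. if blk k = b then g b * f k else 0)"
    by (rule sum.swap)
  also have "\<dots> = (\<Sum>k\<in>UNIV. g (blk k) * f k)"
  proof (rule sum.cong)
    fix k :: 'a
    have "(\<Sum>b\<in>blk`UNIV. if blk k = b then g b * f k else 0) = (\<Sum>b\<in>blk`UNIV. if b = blk k then g b * f k else 0)"
      by (rule sum.cong) auto
    also have "\<dots> = g (blk k) * f k" by (simp add: sum.delta')
    finally show "(\<Sum>b\<in>blk`UNIV. if blk k = b then g b * f k else 0) = g (blk k) * f k" .
  qed simp
  finally show ?thesis by simp
qed

lemma norm_sq_vec: "(norm (x::complex^'q))\<^sup>2 = (\<Sum>k\<in>UNIV. (cmod (x$k))\<^sup>2)"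
  by (simp add: norm_vec_def L2_set_def sum_nonneg)

lemma norm_sq_rvec: "(norm (x::real^'q))\<^sup>2 = (\<Sum>k\<in>UNIV. (x$k)\<^sup>2)"
  by (simp add: norm_vec_def L2_set_def sum_nonneg)

lemma block_ineq:
  fixes z w :: "complex^'q" and blk :: "'q \<Rightarrow> 'b"
  assumes D: "\<Delta> \<in> Delta2 blk" and wz: "w = \<Delta> *v z" and dd: "\<And>b. 0 \<le> dd b"
  shows "(\<Sum>k\<in>UNIV. dd (blk k) * (cmod (w$k))\<^sup>2) \<le> (\<Sum>k\<in>UNIV. dd (blk k) * (cmod (z$k))\<^sup>2)"
proof -
  have bd: "\<And>j k. blk j \<noteq> blk k \<Longrightarrow> \<Delta> $ j $ k = 0"
    and nb: "\<And>b x. (\<forall>j. blk j \<noteq> b \<longrightarrow> x $ j = 0) \<Longrightarrow> norm (\<Delta> *v x) \<le> norm x"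
    using D by (auto simp: Delta2_def)
  have blkineq: "(\<Sum>k\<in>UNIV. if blk k = b then (cmod (w$k))\<^sup>2 else 0) \<le> (\<Sum>k\<in>UNIV. if blk k = b then (cmod (z$k))\<^sup>2 else 0)" for b
  proof -
    define zb where "zb = (\<chi> k. if blk k = b then z$k else 0)"
    have "\<Delta> *v zb = (\<chi> j. if blk j = b then w$j else 0)"
    proof -
      have "(\<Delta> *v zb)$j = (if blk j = b then w$j else 0)" for j
      proof -
        have "(\<Delta> *v zb)$j = (\<Sum>k\<in>UNIV. if blk k = b then \<Delta>$j$k * z$k else 0)"
          by (simp add: matrix_vector_mult_def zb_def if_distrib cong: if_cong)
        also have "\<dots> = (if blk j = b then w$j else 0)"
        proof (cases "blk j = b")
          case True
          then show ?thesis unfolding wz matrix_vector_mult_def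
            using bd by (auto intro!: sum.cong)
        next
          case False
          then show ?thesis using bd by (auto intro!: sum.neutral)
        qed
        finally show ?thesis .
      qed
      thus ?thesis by (simp add: vec_eq_iff)
    qed
    moreover have "norm (\<Delta> *v zb) \<le> norm zb" by (rule nb[of b]) (simp add: zb_def)
    ultimately have "(norm (\<chi> j. if blk j = b then w$j else 0))\<^sup>2 \<le> (norm zb)\<^sup>2"
      by (simp add: power_mono)
    moreover have "\<And>u::complex^'q. (norm (\<chi> j. if blk j = b then u$j else 0))\<^sup>2 = (\<Sum>k\<in>UNIV. if blk k = b then (cmod (u$k))\<^sup>2 else 0)"
      unfolding norm_sq_vec by (intro sum.cong) auto
    ultimately show ?thesis unfolding zb_def by metis
  qed
  show ?thesis
    unfolding group_blk[of dd blk]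
    by (intro sum_mono mult_left_mono blkineq dd)
qed

lemma cmod_bound:
  fixes C :: "real^'n^'q" and F :: "real^'q^'q" and v :: "complex^'n" and w :: "complex^'q"
  assumes nC: "nonneg_mat C" and nF: "nonneg_mat F"
  shows "cmod ((cmat C *v v + cmat F *v w)$k) \<le> (C *v (\<chi> i. cmod (v$i)) + F *v (\<chi> k. cmod (w$k)))$k"
proof -
  have "cmod ((cmat C *v v + cmat F *v w)$k) \<le> (\<Sum>i\<in>UNIV. cmod (complex_of_real (C$k$i) * v$i)) + (\<Sum>j\<in>UNIV. cmod (complex_of_real (F$k$j) * w$j))"
    unfolding vector_add_component cmat_mv_nth by (intro norm_triangle_le add_mono norm_sum)
  also have "\<dots> = (C *v (\<chi> i. cmod (v$i)) + F *v (\<chi> k. cmod (w$k)))$k"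
    using nC nF by (simp add: matrix_vector_mult_def norm_mult nonneg_mat_def)
  finally show ?thesis .
qed

lemma ccore:
  fixes A :: "real^'n^'n" and E :: "real^'q^'n" and C :: "real^'n^'q" and F :: "real^'q^'q"
    and d :: "'b \<Rightarrow> real" and blk :: "'q \<Rightarrow> 'b" and lam mu :: "real^'n" and nu :: "real^'q"
    and v :: "complex^'n" and w :: "complex^'q"
  defines "D \<equiv> (\<chi> i j. if i = j then d (blk i) else 0) :: real^'q^'q"
  assumes mA: "metzler A" and nE: "nonneg_mat E" and nC: "nonneg_mat C" and nF: "nonneg_mat F"
   and dpos: "\<And>b. 0 < d b" and lp: "pos_vec lam" and mp: "pos_vec mu" and np: "pos_vec nu"
   and c1: "neg_vec (A *v lam + E *v nu)"
   and r1: "neg_vec (lam v* (transpose C ** D ** C) + nu v* (transpose F ** D ** C) + mu v* A)"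
   and r2: "neg_vec (lam v* (transpose C ** D ** F) + nu v* (transpose F ** D ** F - D) + mu v* E)"
   and Dl: "\<Delta> \<in> Delta2 blk"
   and wz: "w = \<Delta> *v (cmat C *v v + cmat F *v w)"
   and f1: "\<forall>i. 0 \<le> (A *v (\<chi> i. cmod (v$i)) + E *v (\<chi> k. cmod (w$k)))$i"
  shows "v = 0 \<and> w = 0"
proof (rule ccontr)
  assume nz0: "\<not> (v = 0 \<and> w = 0)"
  define x where "x = (\<chi> i. cmod (v$i))"
  define om where "om = (\<chi> k. cmod (w$k))"
  have nz: "x \<noteq> 0 \<or> om \<noteq> 0"
  proof (cases "v = 0")
    case True
    then obtain k where "w$k \<noteq> 0" using nz0 by (auto simp: vec_eq_iff)
    hence "om$k \<noteq> 0" by (simp add: om_def)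
    thus ?thesis by auto
  next
    case False
    then obtain k where "v$k \<noteq> 0" by (auto simp: vec_eq_iff)
    hence "x$k \<noteq> 0" by (simp add: x_def)
    thus ?thesis by auto
  qed
  have f2: "(\<Sum>k\<in>UNIV. d (blk k) * (om$k)\<^sup>2) \<le> (\<Sum>k\<in>UNIV. d (blk k) * ((C *v x + F *v om)$k)\<^sup>2)"
  proof -
    have "(\<Sum>k\<in>UNIV. d (blk k) * (om$k)\<^sup>2) \<le> (\<Sum>k\<in>UNIV. d (blk k) * (cmod ((cmat C *v v + cmat F *v w)$k))\<^sup>2)"
      unfolding om_def using block_ineq[OF Dl wz, of d] dpos by (simp add: less_imp_le)
    also have "\<dots> \<le> (\<Sum>k\<in>UNIV. d (blk k) * ((C *v x + F *v om)$k)\<^sup>2)"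
      unfolding x_def om_def using cmod_bound[OF nC nF] dpos
      by (intro sum_mono mult_left_mono power_mono) (auto simp: less_imp_le)
    finally show ?thesis .
  qed
  show False
  proof (rule core[OF mA nE nC nF _ lp mp np c1, of "\<lambda>k. d (blk k)" x om])
    show "\<And>k. 0 < d (blk k)" using dpos by simp
    show "\<And>u z. \<forall>i. 0 \<le> u$i \<Longrightarrow> \<forall>k. 0 \<le> z$k \<Longrightarrow> u \<noteq> 0 \<or> z \<noteq> 0 \<Longrightarrow>
        (\<Sum>k\<in>UNIV. d (blk k) * (C *v lam + F *v nu)$k * (C *v u + F *v z)$k) - (\<Sum>k\<in>UNIV. d (blk k) * nu$k * z$k)
         + (\<Sum>i\<in>UNIV. mu$i * (A *v u + E *v z)$i) < 0"
      using cert_c2[where dd="\<lambda>k. d (blk k)" and lam=lam and nu=nu and mu=mu and A=A and E=E and C=C and F=F] r1 r2 unfolding D_def by blast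
    show "\<forall>i. 0 \<le> x$i" by (simp add: x_def)
    show "\<forall>k. 0 \<le> om$k" by (simp add: om_def)
    show "x \<noteq> 0 \<or> om \<noteq> 0" by (rule nz)
    show "\<forall>i. 0 \<le> (A *v x + E *v om)$i" using f1 by (simp add: x_def om_def)
    show "(\<Sum>k\<in>UNIV. d (blk k) * (om$k)\<^sup>2) \<le> (\<Sum>k\<in>UNIV. d (blk k) * ((C *v x + F *v om)$k)\<^sup>2)" by (rule f2)
  qed
qed

lemma inv_props:
  assumes "invertible (N::'a::semiring_1^'n^'n)"
  shows "N ** matrix_inv N = mat 1" "matrix_inv N ** N = mat 1"
  using someI_ex[OF assms[unfolded invertible_def]] unfolding matrix_inv_def by auto

lemma ker_invertible:
  fixes N :: "'a::field^'n^'n"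
  assumes "\<And>z. N *v z = 0 \<Longrightarrow> z = 0"
  shows "invertible N"
  using assms invertible_left_inverse matrix_left_invertible_ker by blast

lemma suff:
  fixes A :: "real^'n^'n" and E :: "real^'q^'n" and C :: "real^'n^'q" and F :: "real^'q^'q"
    and blk :: "'q \<Rightarrow> 'b" and lam mu :: "real^'n" and nu :: "real^'q" and D :: "real^'q^'q"
  assumes mA: "metzler A" and nE: "nonneg_mat E" and nC: "nonneg_mat C" and nF: "nonneg_mat F"
   and lp: "pos_vec lam" and mp: "pos_vec mu" and np: "pos_vec nu" and DD: "D \<in> D_Delta blk"
   and c1: "neg_vec (A *v lam + E *v nu)"
   and r1: "neg_vec (lam v* (transpose C ** D ** C) + nu v* (transpose F ** D ** C) + mu v* A)"
   and r2: "neg_vec (lam v* (transpose C ** D ** F) + nu v* (transpose F ** D ** F - D) + mu v* E)"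
  shows "robustly_stable blk A E C F"
proof -
  obtain d where dpos: "\<And>b. 0 < d b" and Dd: "D = (\<chi> i j. if i = j then d (blk i) else 0)"
    using DD by (auto simp: D_Delta_def)
  note cc = ccore[where d=d and blk=blk and A=A and E=E and C=C and F=F and lam=lam and mu=mu and nu=nu,
      OF mA nE nC nF dpos lp mp np c1 r1[unfolded Dd] r2[unfolded Dd]]
  show ?thesis unfolding robustly_stable_def
  proof (intro ballI conjI)
    fix \<Delta> assume Dl: "\<Delta> \<in> Delta2 blk"
    let ?N = "mat 1 - cmat F ** \<Delta>"
    have Nv: "\<And>z. ?N *v z = z - cmat F *v (\<Delta> *v z)"
      by (simp add: matrix_vector_mult_diff_rdistrib matrix_vector_mul_assoc)
    show inv: "invertible ?N"
    proof (rule ker_invertible)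
      fix z assume "?N *v z = 0"
      hence zF: "z = cmat F *v (\<Delta> *v z)" using Nv by simp
      define w where "w = \<Delta> *v z"
      have wz: "w = \<Delta> *v (cmat C *v 0 + cmat F *v w)" using zF by (simp add: w_def)
      have f1: "\<forall>i. 0 \<le> (A *v (\<chi> i. cmod ((0::complex^'n)$i)) + E *v (\<chi> k. cmod (w$k)))$i"
        using nE by (auto simp: matrix_vector_mult_def nonneg_mat_def intro!: sum_nonneg)
      from cc[OF Dl wz f1] have "w = 0" by simp
      thus "z = 0" using zF by (simp add: w_def)
    qed
    show "hurwitz (cmat A + cmat E ** \<Delta> ** matrix_inv ?N ** cmat C)"
      unfolding hurwitz_def
    proof (intro allI impI, rule ccontr)
      fix l v assume lv: "v \<noteq> 0 \<and> (cmat A + cmat E ** \<Delta> ** matrix_inv ?N ** cmat C) *v v = l *s v"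
        and "\<not> Re l < 0"
      hence l: "0 \<le> Re l" by simp
      define z where "z = matrix_inv ?N *v (cmat C *v v)"
      define w where "w = \<Delta> *v z"
      have "?N *v z = cmat C *v v"
        unfolding z_def matrix_vector_mul_assoc[of ?N] inv_props(1)[OF inv] by simp
      hence zz: "z = cmat C *v v + cmat F *v w" unfolding Nv w_def by (simp add: algebra_simps)
      have wz: "w = \<Delta> *v (cmat C *v v + cmat F *v w)" using zz w_def by simp
      have "l *s v = cmat A *v v + cmat E *v w"
        using lv by (simp add: matrix_vector_mult_add_rdistrib matrix_vector_mul_assoc[symmetric] w_def z_def)
      from fact1[OF mA nE l this] have f1: "\<forall>i. 0 \<le> (A *v (\<chi> i. cmod (v$i)) + E *v (\<chi> k. cmod (w$k)))$i" by blast
      from cc[OF Dl wz f1] lv show False by simp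
    qed
  qed
qed

definition cvec :: "real^'n \<Rightarrow> complex^'n" where
  "cvec x = (\<chi> i. complex_of_real (x$i))"

lemma cvec_nth [simp]: "cvec x $ i = complex_of_real (x$i)"
  by (simp add: cvec_def)

lemma cmat_cvec: "cmat M *v cvec x = cvec (M *v x)"
  by (simp add: vec_eq_iff cmat_mv_nth matrix_vector_mult_def)

lemma cvec_add: "cvec x + cvec y = cvec (x + y)"
  by (simp add: vec_eq_iff)

lemma cvec_eq0: "cvec x = 0 \<longleftrightarrow> x = 0"
  by (simp add: vec_eq_iff)

lemma cmat_mult: "cmat M ** cmat N = cmat (M ** N)"
  by (simp add: vec_eq_iff cmat_def matrix_matrix_mult_def)

lemma rs_pair:
  fixes A :: "real^'n^'n" and E :: "real^'q^'n" and C :: "real^'n^'q" and F :: "real^'q^'q"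
    and blk :: "'q \<Rightarrow> 'b" and v :: "complex^'n" and w :: "complex^'q"
  assumes rs: "robustly_stable blk A E C F" and Dl: "\<Delta> \<in> Delta2 blk" and l: "0 \<le> Re l"
    and eq: "l *s v = cmat A *v v + cmat E *v w"
    and wz: "w = \<Delta> *v (cmat C *v v + cmat F *v w)"
  shows "v = 0 \<and> w = 0"
proof -
  let ?N = "mat 1 - cmat F ** \<Delta>"
  have inv: "invertible ?N" and hw: "hurwitz (cmat A + cmat E ** \<Delta> ** matrix_inv ?N ** cmat C)"
    using rs Dl by (auto simp: robustly_stable_def)
  have Nv: "\<And>z. ?N *v z = z - cmat F *v (\<Delta> *v z)"
    by (simp add: matrix_vector_mult_diff_rdistrib matrix_vector_mul_assoc)
  define z where "z = cmat C *v v + cmat F *v w"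
  have wz': "w = \<Delta> *v z" using wz z_def by simp
  have Nz: "?N *v z = cmat C *v v" unfolding Nv wz'[symmetric] by (simp add: z_def)
  have zi: "z = matrix_inv ?N *v (cmat C *v v)"
    using arg_cong[OF Nz, of "\<lambda>u. matrix_inv ?N *v u"]
    by (simp add: matrix_vector_mul_assoc inv_props(2)[OF inv])
  have v0: "v = 0"
  proof (rule ccontr)
    assume "v \<noteq> 0"
    moreover have "(cmat A + cmat E ** \<Delta> ** matrix_inv ?N ** cmat C) *v v = l *s v"
      using eq by (simp add: matrix_vector_mult_add_rdistrib matrix_vector_mul_assoc[symmetric] zi[symmetric] wz'[symmetric])
    ultimately have "Re l < 0" using hw by (auto simp: hurwitz_def)
    with l show False by simp
  qed
  have "?N *v z = 0" using Nz v0 by simp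
  hence "z = 0" using inj_matrix_vector_mult[OF inv] by (metis matrix_vector_mult_0_right injD)
  thus ?thesis using v0 wz' by simp
qed

lemma eps_nonneg:
  fixes c k :: real
  assumes "\<And>e. 0 < e \<Longrightarrow> 0 \<le> c + e * k"
  shows "0 \<le> c"
proof (rule ccontr)
  assume "\<not> 0 \<le> c"
  hence c: "c < 0" by simp
  define e where "e = - c / (2 * (\<bar>k\<bar> + 1))"
  have "0 < 2 * (\<bar>k\<bar> + 1)" by simp
  hence e: "0 < e" using c unfolding e_def by (intro divide_pos_pos) auto
  have "e * k \<le> e * \<bar>k\<bar>" using e by (simp add: mult_left_mono)
  also have "\<dots> < e * (\<bar>k\<bar> + 1)" using e by simp
  also have "\<dots> = - c / 2" unfolding e_def by (simp add: field_simps)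
  finally have "c + e * k < 0" using c by linarith
  with assms[OF e] show False by simp
qed

lemma axis_inner [simp]: "inner (axis i 1) (x::real^'n) = x$i"
  by (metis cart_eq_inner_axis inner_commute)

lemma inner_vec1: "inner w (vec 1 :: real^'n) = (\<Sum>i\<in>UNIV. w$i)"
  by (simp add: inner_vec_def)

lemma gordan:
  fixes M :: "real^'n^'m"
  assumes nx: "\<not>(\<exists>x. pos_vec x \<and> neg_vec (M *v x))"
  shows "\<exists>y. (\<forall>i. 0 \<le> y$i) \<and> y \<noteq> 0 \<and> (\<forall>j. 0 \<le> (y v* M)$j)"
proof -
  define S where "S = {y::real^'m. \<forall>i. y$i < 0}"
  define P where "P = {x::real^'n. \<forall>i. 0 < x$i}"
  define T where "T = (\<lambda>x. M *v x) ` P"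
  have S_eq: "S = (\<Inter>i\<in>UNIV. {y. inner (axis i 1) y < 0})"
    by (auto simp: S_def)
  have cS: "convex S" unfolding S_eq by (intro convex_INT convex_halfspace_lt)
  have P_eq: "P = (\<Inter>i\<in>UNIV. {y. inner (- axis i 1) y < 0})"
    by (auto simp: P_def)
  have cP: "convex P" unfolding P_eq by (intro convex_INT convex_halfspace_lt)
  have cT: "convex T" unfolding T_def
    by (rule convex_linear_image[OF _ cP]) (simp add: matrix_vector_mul_linear)
  have nS: "S \<noteq> {}" proof -
    have "vec (-1) \<in> S" by (simp add: S_def)
    thus ?thesis by blast
  qed
  have nT: "T \<noteq> {}" unfolding T_def P_def by (auto intro!: exI[of _ "vec 1"])
  have dj: "S \<inter> T = {}" using nx by (auto simp: S_def T_def P_def pos_vec_def neg_vec_def)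
  obtain a b where a0: "a \<noteq> 0" and aS: "\<forall>x\<in>S. inner a x \<le> b" and aT: "\<forall>x\<in>T. inner a x \<ge> b"
    using separating_hyperplane_sets[OF cS cT nS nT dj] by blast
  have apos: "0 \<le> a$k" for k
  proof (rule ccontr)
    assume "\<not> 0 \<le> a$k"
    hence ak: "a$k < 0" by simp
    define n where "n = (\<bar>b\<bar> + \<bar>\<Sum>i\<in>UNIV. a$i\<bar> + 1) / (- a$k)"
    have n0: "0 \<le> n" using ak unfolding n_def by (intro divide_nonneg_pos) auto
    have "vec (-1) - n *\<^sub>R axis k 1 \<in> S" using n0 by (auto simp: S_def axis_def)
    hence "inner a (vec (-1) - n *\<^sub>R axis k 1) \<le> b" using aS by blast
    moreover have "inner a (vec (-1) - n *\<^sub>R axis k 1) = - (\<Sum>i\<in>UNIV. a$i) - n * a$k"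
    proof -
      have "inner a (vec (-1)) = - (\<Sum>i\<in>UNIV. a$i)" by (simp add: inner_vec_def sum_negf)
      moreover have "inner a (axis k 1) = a$k" by (simp add: inner_axis)
      ultimately show ?thesis by (simp add: inner_diff_right)
    qed
    moreover have "n * a$k = - (\<bar>b\<bar> + \<bar>\<Sum>i\<in>UNIV. a$i\<bar> + 1)" using ak by (simp add: n_def)
    ultimately show False by linarith
  qed
  have b0: "0 \<le> b"
  proof (rule eps_nonneg[of b "\<Sum>i\<in>UNIV. a$i"])
    fix e :: real assume e: "0 < e"
    have "vec (-e) \<in> S" using e by (simp add: S_def)
    hence "inner a (vec (-e)) \<le> b" using aS by blast
    moreover have "inner a (vec (-e)) = - e * (\<Sum>i\<in>UNIV. a$i)"
      by (simp add: inner_vec_def sum_distrib_left algebra_simps sum_negf)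
    ultimately show "0 \<le> b + e * (\<Sum>i\<in>UNIV. a$i)" by linarith
  qed
  have "0 \<le> (a v* M)$j" for j
  proof (rule eps_nonneg[of _ "\<Sum>i\<in>UNIV. (a v* M)$i"])
    fix e :: real assume e: "0 < e"
    have "axis j 1 + vec e \<in> P" using e by (auto simp: P_def axis_def)
    hence "M *v (axis j 1 + vec e) \<in> T" by (simp add: T_def)
    hence "b \<le> inner a (M *v (axis j 1 + vec e))" using aT by blast
    also have "\<dots> = inner (a v* M) (axis j 1 + vec e)" by (simp add: dot_lmul_matrix)
    also have "\<dots> = (a v* M)$j + e * (\<Sum>i\<in>UNIV. (a v* M)$i)"
    proof -
      have "inner (a v* M) (vec e) = e * (\<Sum>i\<in>UNIV. (a v* M)$i)" by (simp add: inner_vec_def sum_distrib_left mult.commute)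
      moreover have "inner (a v* M) (axis j 1) = (a v* M)$j" by (simp add: inner_axis)
      ultimately show ?thesis by (simp add: inner_add_right)
    qed
    finally show "0 \<le> (a v* M)$j + e * (\<Sum>i\<in>UNIV. (a v* M)$i)" using b0 by linarith
  qed
  thus ?thesis using apos a0 by blast
qed

lemma metzler_shift_nonneg:
  fixes A :: "real^'n^'n"
  assumes mA: "metzler A" and c: "\<And>i. - A$i$i \<le> c" and z: "\<forall>j. 0 \<le> z$j"
  shows "0 \<le> (A *v z + c *\<^sub>R z)$i"
proof -
  have "(A *v z + c *\<^sub>R z)$i = (A$i$i + c) * z$i + (\<Sum>j\<in>UNIV - {i}. A$i$j * z$j)"
    by (simp add: matrix_vector_mult_def sum.remove[of UNIV i] algebra_simps)
  moreover have "0 \<le> A$i$i + c" using c[of i] by linarith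
  moreover have "0 \<le> (\<Sum>j\<in>UNIV - {i}. A$i$j * z$j)"
    using mA z by (auto simp: metzler_def intro!: sum_nonneg mult_nonneg_nonneg)
  ultimately show ?thesis using z by simp
qed

lemma pf_brouwer:
  fixes A :: "real^'n^'n" and y :: "real^'n"
  assumes mA: "metzler A" and yn: "\<forall>i. 0 \<le> y$i" and y0: "y \<noteq> 0" and Ay: "\<forall>i. 0 \<le> (A *v y)$i"
  shows "\<exists>x r. x \<noteq> 0 \<and> 0 \<le> r \<and> A *v x = r *\<^sub>R x"
proof -
  define c where "c = 1 + (\<Sum>i\<in>UNIV. \<bar>A$i$i\<bar>)"
  have cA: "\<And>i. - A$i$i \<le> c"
  proof -
    fix i
    have "\<bar>A$i$i\<bar> \<le> (\<Sum>i\<in>UNIV. \<bar>A$i$i\<bar>)" by (rule member_le_sum) auto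
    thus "- A$i$i \<le> c" unfolding c_def by linarith
  qed
  have c1: "1 \<le> c" unfolding c_def by (simp add: sum_nonneg)
  define K where "K = {x::real^'n. (\<forall>i. 0 \<le> x$i) \<and> inner (vec 1) x = 1 \<and> (\<forall>i. 0 \<le> (A *v x)$i)}"
  define sg where "sg = (\<lambda>x::real^'n. inner (vec 1) (A *v x + c *\<^sub>R x))"
  define f where "f = (\<lambda>x. inverse (sg x) *\<^sub>R (A *v x + c *\<^sub>R x))"
  have K_eq: "K = (\<Inter>i\<in>UNIV. {x. 0 \<le> inner (axis i 1) x}) \<inter> {x. inner (vec 1) x = 1} \<inter> (\<Inter>i\<in>UNIV. {x. 0 \<le> inner (A$i) x})"
    by (auto simp: K_def matrix_vector_mul_component)
  have closedK: "closed K" unfolding K_eq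
    by (intro closed_Int closed_INT closed_halfspace_ge closed_hyperplane ballI)
  have convexK: "convex K" unfolding K_eq
    by (intro convex_Int convex_INT convex_halfspace_ge convex_hyperplane ballI)
  have boundedK: "bounded K" unfolding bounded_iff
  proof (intro exI ballI)
    fix x assume "x \<in> K"
    hence "(\<Sum>i\<in>UNIV. \<bar>x$i\<bar>) = 1" by (simp add: K_def inner_vec_def)
    thus "norm x \<le> 1" using norm_le_l1_cart[of x] by simp
  qed
  have compactK: "compact K" using closedK boundedK by (simp add: compact_eq_bounded_closed)
  have sy: "0 < (\<Sum>i\<in>UNIV. y$i)"
  proof -
    obtain k where "y$k \<noteq> 0" using y0 by (auto simp: vec_eq_iff)
    hence "0 < y$k" using yn by (simp add: order_le_neq_trans)
    moreover have "y$k \<le> (\<Sum>i\<in>UNIV. y$i)" by (rule member_le_sum) (use yn in auto)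
    ultimately show ?thesis by simp
  qed
  have neK: "K \<noteq> {}"
  proof -
    have "inverse (\<Sum>i\<in>UNIV. y$i) *\<^sub>R y \<in> K"
      using yn Ay sy by (auto simp: K_def inner_vec_def matrix_vector_mult_scaleR sum_distrib_left[symmetric])
    thus ?thesis by blast
  qed
  have sgK: "c \<le> sg x" if "x \<in> K" for x
  proof -
    have "sg x = (\<Sum>i\<in>UNIV. (A *v x)$i) + c * inner (vec 1) x"
      by (simp add: sg_def inner_add_right inner_vec_def sum.distrib sum_distrib_left)
    also have "\<dots> = (\<Sum>i\<in>UNIV. (A *v x)$i) + c" using that by (simp add: K_def)
    finally show ?thesis using that by (auto simp: K_def intro!: sum_nonneg)
  qed
  have lin: "continuous_on K ((*v) A)"
    by (rule linear_continuous_on[OF matrix_vector_mul_bounded_linear])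
  have nz: "\<forall>x\<in>K. inner (vec 1) (A *v x + c *\<^sub>R x) \<noteq> 0"
    using sgK c1 by (force simp: sg_def)
  have contf: "continuous_on K f" unfolding f_def sg_def
    using lin nz by (intro continuous_intros) auto
  have fK: "f \<in> K \<rightarrow> K"
  proof
    fix x assume xK: "x \<in> K"
    have sp: "0 < sg x" using sgK[OF xK] c1 by simp
    have xn: "\<forall>j. 0 \<le> x$j" using xK by (simp add: K_def)
    have Axn: "\<forall>j. 0 \<le> (A *v x)$j" using xK by (simp add: K_def)
    have "\<forall>i. 0 \<le> (f x)$i"
      using metzler_shift_nonneg[OF mA cA xn] sp by (simp add: f_def)
    moreover have "inner (vec 1) (f x) = 1" using sp by (simp add: f_def sg_def)
    moreover have "\<forall>i. 0 \<le> (A *v f x)$i"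
    proof
      fix i
      have "A *v f x = inverse (sg x) *\<^sub>R (A *v (A *v x) + c *\<^sub>R (A *v x))"
        by (simp add: f_def matrix_vector_mult_scaleR matrix_vector_right_distrib)
      moreover have "0 \<le> (A *v (A *v x) + c *\<^sub>R (A *v x))$i"
        by (rule metzler_shift_nonneg[OF mA cA Axn])
      ultimately show "0 \<le> (A *v f x)$i" using sp by simp
    qed
    ultimately show "f x \<in> K" by (simp add: K_def)
  qed
  obtain x where xK: "x \<in> K" and fx: "f x = x"
    using brouwer[OF compactK convexK neK contf fK] by blast
  have sp: "0 < sg x" using sgK[OF xK] c1 by simp
  have "A *v x + c *\<^sub>R x = sg x *\<^sub>R x"
    using arg_cong[OF fx, of "\<lambda>u. sg x *\<^sub>R u"] sp by (simp add: f_def)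
  hence "A *v x = (sg x - c) *\<^sub>R x" by (simp add: algebra_simps)
  moreover have "x \<noteq> 0" using xK by (auto simp: K_def)
  moreover have "0 \<le> sg x - c" using sgK[OF xK] by simp
  ultimately show ?thesis by blast
qed

lemma mv_neg: "(M::real^'n^'m) *v (- x) = - (M *v x)"
  by (simp add: vec_eq_iff matrix_vector_mult_def sum_negf)

lemma mm_rneg: "(M::real^'n^'m) ** (- N) = - (M ** N)"
  by (simp add: vec_eq_iff matrix_matrix_mult_def sum_negf)

lemma mm_lneg: "(- M::real^'n^'m) ** N = - (M ** N)"
  by (simp add: vec_eq_iff matrix_matrix_mult_def sum_negf)

lemma zero_Delta2: "0 \<in> Delta2 blk"
  by (simp add: Delta2_def)

lemma rs_no_eig:
  fixes A :: "real^'n^'n" and E :: "real^'q^'n" and C :: "real^'n^'q" and F :: "real^'q^'q"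
    and blk :: "'q \<Rightarrow> 'b"
  assumes rs: "robustly_stable blk A E C F" and x0: "x \<noteq> 0" and r: "0 \<le> r"
    and ev: "A *v x = r *\<^sub>R x"
  shows False
proof -
  have "complex_of_real r *s cvec x = cmat A *v cvec x + cmat E *v 0"
    using ev by (simp add: cmat_cvec vec_eq_iff)
  moreover have "(0::complex^'q) = 0 *v (cmat C *v cvec x + cmat F *v 0)" by simp
  ultimately have "cvec x = 0 \<and> (0::complex^'q) = 0"
    using rs_pair[OF rs zero_Delta2, of "complex_of_real r"] r by simp
  thus False using x0 by (simp add: cvec_eq0)
qed

lemma metzler_transpose: "metzler A \<Longrightarrow> metzler (transpose A)"
  by (simp add: metzler_def transpose_def)

lemma minratio:
  fixes B :: "real^'n^'n"
  assumes mB: "metzler B" and p: "pos_vec m" and n: "neg_vec (B *v m)"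
    and Bx: "\<forall>i. (B *v x)$i \<le> 0"
  shows "0 \<le> x$k"
proof (rule ccontr)
  assume "\<not> 0 \<le> x$k"
  hence xk: "x$k < 0" by simp
  have mp: "\<And>i. 0 < m$i" using p by (simp add: pos_vec_def)
  define R where "R = (\<lambda>i. x$i / m$i) ` UNIV"
  define t where "t = Min R"
  have fR: "finite R" "R \<noteq> {}" by (auto simp: R_def)
  have "t \<in> R" using Min_in[OF fR] unfolding t_def .
  then obtain i0 where i0: "t = x$i0 / m$i0" unfolding R_def by blast
  have tle: "\<And>j. t \<le> x$j / m$j" unfolding t_def R_def by (rule Min_le) auto
  have tneg: "t < 0" using tle[of k] xk mp[of k] by (smt (verit) divide_neg_pos)
  define x' where "x' = x - t *\<^sub>R m"
  have x'n: "\<And>j. 0 \<le> x'$j"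
  proof -
    fix j
    have "t * m$j \<le> x$j" using tle[of j] mp[of j] by (simp add: le_divide_eq)
    thus "0 \<le> x'$j" by (simp add: x'_def)
  qed
  have x'0: "x'$i0 = 0" using mp[of i0] by (simp add: x'_def i0)
  have "(B *v x')$i0 = B$i0$i0 * x'$i0 + (\<Sum>j\<in>UNIV - {i0}. B$i0$j * x'$j)"
    by (simp add: matrix_vector_mult_def sum.remove[of UNIV i0])
  also have "\<dots> \<ge> 0" using x'0 x'n mB by (auto simp: metzler_def intro!: sum_nonneg mult_nonneg_nonneg)
  finally have ge: "0 \<le> (B *v x')$i0" .
  have "(B *v x')$i0 = (B *v x)$i0 - t * (B *v m)$i0"
    by (simp add: x'_def matrix_vector_mult_diff_distrib matrix_vector_mult_scaleR)
  moreover have "0 < t * (B *v m)$i0" using tneg n by (simp add: neg_vec_def mult_neg_neg)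
  ultimately have "(B *v x')$i0 < 0" using Bx by (smt (verit))
  with ge show False by simp
qed

lemma inv_lemma:
  fixes A :: "real^'n^'n" and E :: "real^'q^'n" and C :: "real^'n^'q" and F :: "real^'q^'q"
    and blk :: "'q \<Rightarrow> 'b"
  assumes rs: "robustly_stable blk A E C F" and mA: "metzler A"
  shows "\<exists>P. nonneg_mat P \<and> A ** P = - mat 1 \<and> P ** A = - mat 1"
proof -
  have "\<exists>m. pos_vec m \<and> neg_vec (transpose A *v m)"
  proof (rule ccontr)
    assume "\<not> ?thesis"
    from gordan[OF this] obtain y where yn: "\<forall>i. 0 \<le> y$i" and y0: "y \<noteq> 0"
      and yA: "\<forall>j. 0 \<le> (y v* transpose A)$j" by blast
    have "\<forall>j. 0 \<le> (A *v y)$j" using yA by simp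
    from pf_brouwer[OF mA yn y0 this] obtain x r where "x \<noteq> 0" "0 \<le> r" "A *v x = r *\<^sub>R x" by blast
    thus False using rs_no_eig[OF rs] by blast
  qed
  then obtain m where mp: "pos_vec m" and mn: "neg_vec (transpose A *v m)" by blast
  let ?B = "transpose A"
  note mr = minratio[OF metzler_transpose[OF mA] mp mn]
  have invB: "invertible ?B"
  proof (rule ker_invertible)
    fix z assume z: "?B *v z = 0"
    have "\<And>k. 0 \<le> z$k" by (rule mr) (use z in simp)
    moreover have "\<And>k. 0 \<le> (-z)$k" by (rule mr) (use z in \<open>simp add: mv_neg\<close>)
    ultimately show "z = 0" by (auto simp: vec_eq_iff intro: order.antisym)
  qed
  define Q where "Q = matrix_inv ?B"
  have BQ: "?B ** Q = mat 1" and QB: "Q ** ?B = mat 1" using inv_props[OF invB] by (auto simp: Q_def)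
  have Qn: "Q$i$j \<le> 0" for i j
  proof -
    have "?B *v (- (Q *v axis j 1)) = - axis j 1"
      by (simp add: mv_neg matrix_vector_mul_assoc BQ)
    hence "0 \<le> (- (Q *v axis j 1))$i" by (intro mr) (auto simp: axis_def)
    moreover have "(Q *v axis j 1)$i = Q$i$j"
      by (simp add: matrix_vector_mult_def axis_def if_distrib cong: if_cong)
    ultimately show ?thesis by simp
  qed
  define P where "P = - transpose Q"
  have "nonneg_mat P" using Qn by (simp add: nonneg_mat_def P_def transpose_def)
  moreover have "A ** P = - mat 1"
  proof -
    have "A ** transpose Q = transpose (Q ** ?B)" by (simp add: matrix_transpose_mul)
    thus ?thesis by (simp add: P_def QB transpose_mat mm_rneg)
  qed
  moreover have "P ** A = - mat 1"
  proof -
    have "transpose Q ** A = transpose (?B ** Q)" by (simp add: matrix_transpose_mul)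
    thus ?thesis by (simp add: P_def BQ transpose_mat mm_lneg)
  qed
  ultimately show ?thesis by blast
qed

definition blkS :: "('q::finite \<Rightarrow> 'b) \<Rightarrow> ('q \<Rightarrow> real) \<Rightarrow> 'b \<Rightarrow> real" where
  "blkS blk f b = (\<Sum>j\<in>UNIV. if blk j = b then f j else 0)"

lemma blkS_nonneg: "(\<And>j. 0 \<le> f j) \<Longrightarrow> 0 \<le> blkS blk f b"
  by (auto simp: blkS_def intro!: sum_nonneg)

lemma blkS_member: "(\<And>j. 0 \<le> f j) \<Longrightarrow> f k \<le> blkS blk f (blk k)"
  unfolding blkS_def
  by (rule order.trans[OF _ member_le_sum[of k]]) auto

lemma R_in_Delta2:
  fixes om g :: "real^'q" and blk :: "'q \<Rightarrow> 'b"
  defines "nb \<equiv> blkS blk (\<lambda>j. (g$j)\<^sup>2)"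
  defines "R \<equiv> (\<chi> j k. if blk j = blk k then om$j * g$k / nb (blk k) else 0) :: real^'q^'q"
  assumes le: "\<And>b. blkS blk (\<lambda>j. (om$j)\<^sup>2) b \<le> nb b" and gn: "\<forall>k. 0 \<le> g$k"
  shows "cmat R \<in> Delta2 blk"
  unfolding Delta2_def
proof (intro CollectI conjI allI impI)
  fix j k assume "blk j \<noteq> blk k" thus "cmat R $ j $ k = 0" by (simp add: R_def)
next
  fix b and x :: "complex^'q" assume xs: "\<forall>j. blk j \<noteq> b \<longrightarrow> x $ j = 0"
  define S where "S = (\<Sum>k\<in>UNIV. complex_of_real (g$k) * x$k)"
  have Rx: "(cmat R *v x)$j = (if blk j = b then complex_of_real (om$j / nb b) * S else 0)" for j
  proof (cases "blk j = b")
    case True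
    have "(cmat R *v x)$j = (\<Sum>k\<in>UNIV. complex_of_real (om$j / nb b) * (complex_of_real (g$k) * x$k))"
      unfolding cmat_mv_nth
    proof (rule sum.cong)
      fix k
      show "complex_of_real (R$j$k) * x$k = complex_of_real (om$j / nb b) * (complex_of_real (g$k) * x$k)"
        using xs True by (cases "blk k = b") (auto simp: R_def)
    qed simp
    thus ?thesis using True by (simp add: S_def sum_distrib_left)
  next
    case False
    have "(cmat R *v x)$j = 0"
      unfolding cmat_mv_nth
      using xs False by (intro sum.neutral) (auto simp: R_def)
    thus ?thesis using False by simp
  qed
  have nb0: "0 \<le> nb b" unfolding nb_def by (rule blkS_nonneg) simp
  define a where "a = (\<chi> k. if blk k = b then g$k else 0)"
  define c where "c = (\<chi> k. cmod (x$k))"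
  have "cmod S \<le> (\<Sum>k\<in>UNIV. cmod (complex_of_real (g$k) * x$k))" unfolding S_def by (rule norm_sum)
  also have "\<dots> = inner a c"
    unfolding inner_vec_def a_def c_def using xs gn by (intro sum.cong) (auto simp: norm_mult)
  also have "\<dots> \<le> norm a * norm c" by (rule norm_cauchy_schwarz)
  finally have Sle: "cmod S \<le> norm a * norm c" .
  have na: "(norm a)\<^sup>2 = nb b"
    unfolding nb_def blkS_def norm_sq_rvec a_def by (intro sum.cong) auto
  have nc: "norm c = norm x" unfolding c_def norm_vec_def by simp
  have "(norm (cmat R *v x))\<^sup>2 = (\<Sum>j\<in>UNIV. if blk j = b then (om$j / nb b)\<^sup>2 * (cmod S)\<^sup>2 else 0)"
    unfolding norm_sq_vec Rx by (intro sum.cong) (auto simp: norm_mult norm_divide power_mult_distrib power_divide)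
  also have "\<dots> = blkS blk (\<lambda>j. (om$j)\<^sup>2) b * (cmod S)\<^sup>2 / (nb b)\<^sup>2"
    unfolding blkS_def sum_divide_distrib sum_distrib_right by (intro sum.cong) (auto simp: power_divide)
  also have "\<dots> \<le> nb b * (nb b * (norm x)\<^sup>2) / (nb b)\<^sup>2"
  proof (intro divide_right_mono mult_mono)
    show "blkS blk (\<lambda>j. (om$j)\<^sup>2) b \<le> nb b" by (rule le)
    have "(cmod S)\<^sup>2 \<le> (norm a * norm c)\<^sup>2" using Sle by (simp add: power_mono)
    thus "(cmod S)\<^sup>2 \<le> nb b * (norm x)\<^sup>2" by (simp add: power_mult_distrib na nc)
  qed (auto simp: nb0)
  also have "\<dots> \<le> (norm x)\<^sup>2"
    by (cases "nb b = 0") (auto simp: power2_eq_square)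
  finally show "norm (cmat R *v x) \<le> norm x" by (simp add: power2_le_iff_abs_le)
qed

lemma no_gain:
  fixes A :: "real^'n^'n" and E :: "real^'q^'n" and C :: "real^'n^'q" and F :: "real^'q^'q"
    and blk :: "'q \<Rightarrow> 'b" and X :: "real^'q^'n" and om :: "real^'q"
  assumes rs: "robustly_stable blk A E C F" and AX: "A ** X = - E" and nG: "nonneg_mat (F + C ** X)"
    and on: "\<forall>k. 0 \<le> om$k" and o0: "om \<noteq> 0"
  shows "\<exists>k. blkS blk (\<lambda>j. (((F + C ** X) *v om)$j)\<^sup>2) (blk k) < blkS blk (\<lambda>j. (om$j)\<^sup>2) (blk k)"
proof (rule ccontr)
  assume "\<not> ?thesis"
  hence h: "\<And>k. blkS blk (\<lambda>j. (om$j)\<^sup>2) (blk k) \<le> blkS blk (\<lambda>j. (((F + C ** X) *v om)$j)\<^sup>2) (blk k)"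
    by (simp add: not_less)
  define g where "g = (F + C ** X) *v om"
  define nb where "nb = blkS blk (\<lambda>j. (g$j)\<^sup>2)"
  define R :: "real^'q^'q" where "R = (\<chi> j k. if blk j = blk k then om$j * g$k / nb (blk k) else 0)"
  have gn: "\<forall>k. 0 \<le> g$k"
    using nG on by (auto simp: g_def matrix_vector_mult_def nonneg_mat_def intro!: sum_nonneg)
  have le: "blkS blk (\<lambda>j. (om$j)\<^sup>2) b \<le> nb b" for b
  proof (cases "b \<in> range blk")
    case True
    then obtain k where "b = blk k" by blast
    thus ?thesis using h[of k] by (simp add: nb_def g_def)
  next
    case False
    hence "blkS blk (\<lambda>j. (om$j)\<^sup>2) b = 0" unfolding blkS_def by (intro sum.neutral) auto
    moreover have "0 \<le> nb b" unfolding nb_def by (rule blkS_nonneg) simp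
    ultimately show ?thesis by simp
  qed
  have RD: "cmat R \<in> Delta2 blk" unfolding R_def nb_def
    by (rule R_in_Delta2) (use le gn in \<open>auto simp: nb_def\<close>)
  have Rg: "R *v g = om"
  proof -
    have "(R *v g)$j = om$j" for j
    proof -
      have "(R *v g)$j = (\<Sum>k\<in>UNIV. if blk k = blk j then om$j * (g$k)\<^sup>2 / nb (blk j) else 0)"
        unfolding matrix_vector_mult_def R_def vec_lambda_beta by (intro sum.cong) (auto simp: power2_eq_square)
      also have "\<dots> = om$j * nb (blk j) / nb (blk j)"
        unfolding nb_def blkS_def sum_distrib_left sum_divide_distrib by (intro sum.cong) auto
      also have "\<dots> = om$j"
      proof (cases "nb (blk j) = 0")
        case True
        have "(om$j)\<^sup>2 \<le> blkS blk (\<lambda>j. (om$j)\<^sup>2) (blk j)" by (rule blkS_member) simp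
        hence "(om$j)\<^sup>2 \<le> 0" using le[of "blk j"] True by linarith
        hence "om$j = 0" by simp
        thus ?thesis using True by simp
      qed simp
      finally show ?thesis .
    qed
    thus ?thesis by (simp add: vec_eq_iff)
  qed
  have e1: "(0::complex) *s cvec (X *v om) = cmat A *v cvec (X *v om) + cmat E *v cvec om"
    by (simp add: cmat_cvec cvec_add matrix_vector_mul_assoc AX mv_neg[symmetric] cvec_eq0 flip: matrix_vector_mult_add_rdistrib)
  have e2: "cvec om = cmat R *v (cmat C *v cvec (X *v om) + cmat F *v cvec om)"
  proof -
    have "F *v om + C ** X *v om = (F + C ** X) *v om" by (simp add: matrix_vector_mult_add_rdistrib)
    thus ?thesis using Rg by (simp add: cmat_cvec cvec_add matrix_vector_mul_assoc g_def add.commute)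
  qed
  from rs_pair[OF rs RD _ e1 e2] have "cvec om = 0" by simp
  thus False using o0 by (simp add: cvec_eq0)
qed

lemma sqrt_concave_sum:
  fixes g a b :: "'a \<Rightarrow> real"
  assumes fin: "finite I" and g: "\<And>l. 0 \<le> g l" and a: "\<And>l. 0 \<le> a l" and b: "\<And>l. 0 \<le> b l"
    and u0: "0 \<le> u" and u1: "u \<le> 1"
  shows "(1 - u) * (\<Sum>l\<in>I. g l * sqrt (a l))\<^sup>2 + u * (\<Sum>l\<in>I. g l * sqrt (b l))\<^sup>2
        \<le> (\<Sum>l\<in>I. g l * sqrt ((1 - u) * a l + u * b l))\<^sup>2"
proof -
  define z where "z = (\<lambda>l. Complex (sqrt ((1 - u) * a l)) (sqrt (u * b l)))"
  have cz: "cmod (z l) = sqrt ((1 - u) * a l + u * b l)" for l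
    using a[of l] b[of l] u0 u1 by (simp add: z_def complex_norm)
  have sumz: "(\<Sum>l\<in>I. complex_of_real (g l) * z l)
      = Complex (sqrt (1 - u) * (\<Sum>l\<in>I. g l * sqrt (a l))) (sqrt u * (\<Sum>l\<in>I. g l * sqrt (b l)))"
  proof (rule complex_eqI)
    have ea: "(\<Sum>l\<in>I. g l * sqrt ((1 - u) * a l)) = sqrt (1 - u) * (\<Sum>l\<in>I. g l * sqrt (a l))"
      unfolding sum_distrib_left by (rule sum.cong) (simp_all add: real_sqrt_mult)
    have eb: "(\<Sum>l\<in>I. g l * sqrt (u * b l)) = sqrt u * (\<Sum>l\<in>I. g l * sqrt (b l))"
      unfolding sum_distrib_left by (rule sum.cong) (simp_all add: real_sqrt_mult)
    show "Re (\<Sum>l\<in>I. complex_of_real (g l) * z l) = Re (Complex (sqrt (1 - u) * (\<Sum>l\<in>I. g l * sqrt (a l))) (sqrt u * (\<Sum>l\<in>I. g l * sqrt (b l))))"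
      using ea by (simp add: Re_sum z_def)
    show "Im (\<Sum>l\<in>I. complex_of_real (g l) * z l) = Im (Complex (sqrt (1 - u) * (\<Sum>l\<in>I. g l * sqrt (a l))) (sqrt u * (\<Sum>l\<in>I. g l * sqrt (b l))))"
      using eb by (simp add: Im_sum z_def)
  qed
  have "sqrt ((1 - u) * (\<Sum>l\<in>I. g l * sqrt (a l))\<^sup>2 + u * (\<Sum>l\<in>I. g l * sqrt (b l))\<^sup>2)
      = cmod (\<Sum>l\<in>I. complex_of_real (g l) * z l)"
    unfolding sumz complex_norm using u0 u1 by (simp add: power_mult_distrib)
  also have "\<dots> \<le> (\<Sum>l\<in>I. cmod (complex_of_real (g l) * z l))" by (rule norm_sum)
  also have "\<dots> = (\<Sum>l\<in>I. g l * sqrt ((1 - u) * a l + u * b l))"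
    using g by (simp add: norm_mult cz)
  finally have h: "sqrt ((1 - u) * (\<Sum>l\<in>I. g l * sqrt (a l))\<^sup>2 + u * (\<Sum>l\<in>I. g l * sqrt (b l))\<^sup>2)
      \<le> (\<Sum>l\<in>I. g l * sqrt ((1 - u) * a l + u * b l))" .
  have nn: "0 \<le> (1 - u) * (\<Sum>l\<in>I. g l * sqrt (a l))\<^sup>2 + u * (\<Sum>l\<in>I. g l * sqrt (b l))\<^sup>2"
    using u0 u1 by (intro add_nonneg_nonneg mult_nonneg_nonneg) auto
  have "(sqrt ((1 - u) * (\<Sum>l\<in>I. g l * sqrt (a l))\<^sup>2 + u * (\<Sum>l\<in>I. g l * sqrt (b l))\<^sup>2))\<^sup>2
      \<le> (\<Sum>l\<in>I. g l * sqrt ((1 - u) * a l + u * b l))\<^sup>2"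
    by (rule power_mono[OF h]) (use nn in simp)
  thus ?thesis unfolding real_sqrt_pow2[OF nn] .
qed

lemma blkS_diff: "blkS blk (\<lambda>j. f j - g j) b = blkS blk f b - blkS blk g b"
  unfolding blkS_def by (simp add: sum_subtractf[symmetric] if_distrib cong: if_cong)

lemma slemma:
  fixes G :: "real^'q^'q" and blk :: "'q \<Rightarrow> 'b"
  assumes nG: "nonneg_mat G"
    and ng: "\<And>om. \<forall>k. 0 \<le> om$k \<Longrightarrow> om \<noteq> 0 \<Longrightarrow>
       \<exists>k. blkS blk (\<lambda>j. ((G *v om)$j)\<^sup>2) (blk k) < blkS blk (\<lambda>j. (om$j)\<^sup>2) (blk k)"
  shows "\<exists>d. (\<forall>b. 0 < d b) \<and> (\<forall>om. (\<forall>k. 0 \<le> om$k) \<longrightarrow> om \<noteq> 0 \<longrightarrow>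
       (\<Sum>k\<in>UNIV. d (blk k) * ((G *v om)$k)\<^sup>2) < (\<Sum>k\<in>UNIV. d (blk k) * (om$k)\<^sup>2))"
proof -
  define T where "T = {t::real^'q. (\<forall>i. 0 \<le> t$i) \<and> inner (vec 1) t = 1}"
  define hh where "hh = (\<lambda>(t::real^'q) j. (\<Sum>l\<in>UNIV. G$j$l * sqrt (t$l))\<^sup>2 - t$j)"
  define psi where "psi = (\<lambda>t::real^'q. \<chi> k. \<Sum>j\<in>{j. blk j = blk k}. (\<Sum>l\<in>UNIV. G$j$l * sqrt (t$l))\<^sup>2 - t$j)"
  define S where "S = {y::real^'q. \<exists>t\<in>T. \<forall>k. y$k \<le> psi t $ k}"
  define K where "K = convex hull (psi ` T)"
  define Pp where "Pp = {y::real^'q. \<forall>k. 0 \<le> y$k}"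
  have psi_blk: "psi t $ k = blkS blk (hh t) (blk k)" for t k
    unfolding psi_def hh_def blkS_def
    using sum.inter_filter[of UNIV "\<lambda>j. (\<Sum>l\<in>UNIV. G$j$l * sqrt (t$l))\<^sup>2 - t$j" "\<lambda>j. blk j = blk k"] by simp
  have T_eq: "T = (\<Inter>i\<in>UNIV. {x. 0 \<le> inner (axis i 1) x}) \<inter> {x. inner (vec 1) x = 1}"
    by (auto simp: T_def)
  have closedT: "closed T" unfolding T_eq
    by (intro closed_Int closed_INT closed_halfspace_ge closed_hyperplane ballI)
  have convexT: "convex T" unfolding T_eq
    by (intro convex_Int convex_INT convex_halfspace_ge convex_hyperplane ballI)
  have Tle1: "t$i \<le> 1" if "t \<in> T" for t i
  proof -
    have "t$i \<le> (\<Sum>j\<in>UNIV. t$j)" by (rule member_le_sum) (use that in \<open>auto simp: T_def\<close>)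
    thus ?thesis using that by (simp add: T_def inner_vec_def)
  qed
  have boundedT: "bounded T" unfolding bounded_iff
  proof (intro exI ballI)
    fix x assume "x \<in> T"
    hence "(\<Sum>i\<in>UNIV. \<bar>x$i\<bar>) = 1" by (simp add: T_def inner_vec_def)
    thus "norm x \<le> 1" using norm_le_l1_cart[of x] by simp
  qed
  have compactT: "compact T" using closedT boundedT by (simp add: compact_eq_bounded_closed)
  have neT: "T \<noteq> {}"
  proof -
    have i1: "inner (vec 1) (axis undefined 1 :: real^'q) = 1" by (simp only: inner_axis vec_component) simp
    have "axis undefined 1 \<in> T" unfolding T_def using i1 by (auto simp: axis_def)
    thus ?thesis by blast
  qed
  have contpsi: "continuous_on T psi" unfolding psi_def
    by (intro continuous_intros continuous_on_vec_lambda)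
  have compactK: "compact K" unfolding K_def
    by (intro compact_convex_hull compact_continuous_image contpsi compactT)
  have convexK: "convex K" unfolding K_def by simp
  have neK: "K \<noteq> {}" using neT unfolding K_def by simp
  have convexS: "convex S" unfolding convex_def
  proof (intro ballI allI impI)
    fix y1 y2 :: "real^'q" and u v :: real
    assume y1: "y1 \<in> S" and y2: "y2 \<in> S" and uv: "0 \<le> u" "0 \<le> v" "u + v = 1"
    obtain t1 where t1: "t1 \<in> T" "\<forall>k. y1$k \<le> psi t1 $ k" using y1 by (auto simp: S_def)
    obtain t2 where t2: "t2 \<in> T" "\<forall>k. y2$k \<le> psi t2 $ k" using y2 by (auto simp: S_def)
    have tT: "u *\<^sub>R t1 + v *\<^sub>R t2 \<in> T" using convexT t1(1) t2(1) uv by (simp add: convex_def)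
    have "(u *\<^sub>R y1 + v *\<^sub>R y2)$k \<le> psi (u *\<^sub>R t1 + v *\<^sub>R t2) $ k" for k
    proof -
      have "(u *\<^sub>R y1 + v *\<^sub>R y2)$k \<le> u * psi t1 $ k + v * psi t2 $ k"
        using t1(2) t2(2) uv by (simp add: add_mono mult_left_mono)
      also have "\<dots> \<le> psi (u *\<^sub>R t1 + v *\<^sub>R t2) $ k"
      proof -
        have "u * psi t1 $ k + v * psi t2 $ k = (\<Sum>j\<in>{j. blk j = blk k}.
            (u * (\<Sum>l\<in>UNIV. G$j$l * sqrt (t1$l))\<^sup>2 + v * (\<Sum>l\<in>UNIV. G$j$l * sqrt (t2$l))\<^sup>2) - (u * t1$j + v * t2$j))"
          unfolding psi_def by (simp add: sum_distrib_left sum.distrib[symmetric] algebra_simps)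
        also have "\<dots> \<le> (\<Sum>j\<in>{j. blk j = blk k}.
            (\<Sum>l\<in>UNIV. G$j$l * sqrt (u * t1$l + v * t2$l))\<^sup>2 - (u * t1$j + v * t2$j))"
        proof (rule sum_mono)
          fix j
          have "(1 - v) * (\<Sum>l\<in>UNIV. G$j$l * sqrt (t1$l))\<^sup>2 + v * (\<Sum>l\<in>UNIV. G$j$l * sqrt (t2$l))\<^sup>2
               \<le> (\<Sum>l\<in>UNIV. G$j$l * sqrt ((1 - v) * t1$l + v * t2$l))\<^sup>2"
            by (rule sqrt_concave_sum) (use nG t1(1) t2(1) uv in \<open>auto simp: nonneg_mat_def T_def\<close>)
          moreover have "u = 1 - v" using uv by simp
          ultimately show "(u * (\<Sum>l\<in>UNIV. G$j$l * sqrt (t1$l))\<^sup>2 + v * (\<Sum>l\<in>UNIV. G$j$l * sqrt (t2$l))\<^sup>2) - (u * t1$j + v * t2$j)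
              \<le> (\<Sum>l\<in>UNIV. G$j$l * sqrt (u * t1$l + v * t2$l))\<^sup>2 - (u * t1$j + v * t2$j)" by simp
        qed
        also have "\<dots> = psi (u *\<^sub>R t1 + v *\<^sub>R t2) $ k" unfolding psi_def by simp
        finally show ?thesis .
      qed
      finally show ?thesis .
    qed
    thus "u *\<^sub>R y1 + v *\<^sub>R y2 \<in> S" using tT by (auto simp: S_def)
  qed
  have KS: "K \<subseteq> S" unfolding K_def
  proof (rule hull_minimal)
    show "psi ` T \<subseteq> S" by (auto simp: S_def)
    show "convex S" by (rule convexS)
  qed
  have sqT: "(\<chi> l. sqrt (t$l)) \<noteq> 0" if "t \<in> T" for t
  proof
    assume "(\<chi> l. sqrt (t$l)) = 0"
    hence "\<forall>l. t$l = 0" by (simp add: vec_eq_iff)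
    thus False using that by (simp add: T_def inner_vec_def)
  qed
  have hhG: "hh t j = ((G *v (\<chi> l. sqrt (t$l)))$j)\<^sup>2 - ((\<chi> l. sqrt (t$l))$j)\<^sup>2" if "t \<in> T" for t j
    using that by (simp add: hh_def matrix_vector_mult_def T_def)
  have disj: "K \<inter> Pp = {}"
  proof (rule ccontr)
    assume "K \<inter> Pp \<noteq> {}"
    then obtain y where "y \<in> S" "y \<in> Pp" using KS by blast
    then obtain t where tT: "t \<in> T" and yle: "\<forall>k. y$k \<le> psi t $ k" and yp: "\<forall>k. 0 \<le> y$k"
      by (auto simp: S_def Pp_def)
    have "\<exists>k. blkS blk (\<lambda>j. ((G *v (\<chi> l. sqrt (t$l)))$j)\<^sup>2) (blk k) < blkS blk (\<lambda>j. ((\<chi> l. sqrt (t$l))$j)\<^sup>2) (blk k)"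
      using ng[of "\<chi> l. sqrt (t$l)"] sqT[OF tT] tT by (auto simp: T_def)
    then obtain k where k: "blkS blk (\<lambda>j. ((G *v (\<chi> l. sqrt (t$l)))$j)\<^sup>2) (blk k) < blkS blk (\<lambda>j. ((\<chi> l. sqrt (t$l))$j)\<^sup>2) (blk k)"
      by blast
    have "psi t $ k = blkS blk (\<lambda>j. ((G *v (\<chi> l. sqrt (t$l)))$j)\<^sup>2) (blk k) - blkS blk (\<lambda>j. ((\<chi> l. sqrt (t$l))$j)\<^sup>2) (blk k)"
      unfolding psi_blk hhG[OF tT, abs_def] blkS_diff by simp
    hence "psi t $ k < 0" using k by simp
    with yle yp show False by (smt (verit))
  qed
  have closedPp: "closed Pp"
  proof -
    have "Pp = (\<Inter>i\<in>UNIV. {x. 0 \<le> inner (axis i 1) x})" by (auto simp: Pp_def)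
    thus ?thesis by (metis closed_INT closed_halfspace_ge)
  qed
  have convexPp: "convex Pp"
  proof -
    have "Pp = (\<Inter>i\<in>UNIV. {x. 0 \<le> inner (axis i 1) x})" by (auto simp: Pp_def)
    thus ?thesis by (metis convex_INT convex_halfspace_ge)
  qed
  obtain a b where aK: "\<forall>x\<in>K. inner a x < b" and aP: "\<forall>x\<in>Pp. b < inner a x"
    using separating_hyperplane_compact_closed[OF convexK compactK neK convexPp closedPp disj] by blast
  have "(0::real^'q) \<in> Pp" by (simp add: Pp_def)
  hence b0: "b < 0" using aP by force
  have apos: "0 \<le> a$k" for k
  proof (rule ccontr)
    assume "\<not> 0 \<le> a$k"
    hence ak: "a$k < 0" by simp
    have "0 \<le> b / a$k" using ak b0 by (simp add: divide_nonpos_neg less_imp_le)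
    hence "(b / a$k) *\<^sub>R axis k 1 \<in> Pp" by (auto simp: Pp_def axis_def)
    hence "b < inner a ((b / a$k) *\<^sub>R axis k 1)" using aP by blast
    also have "\<dots> = b" using ak by (simp add: inner_axis)
    finally show False by simp
  qed
  define c where "c = (\<lambda>bb. \<Sum>k\<in>UNIV. if blk k = bb then a$k else 0)"
  have c0: "0 \<le> c bb" for bb unfolding c_def using apos by (auto intro!: sum_nonneg)
  have apsi: "inner a (psi t) = (\<Sum>j\<in>UNIV. c (blk j) * hh t j)" for t
  proof -
    have "inner a (psi t) = (\<Sum>k\<in>UNIV. \<Sum>j\<in>UNIV. if blk j = blk k then a$k * hh t j else 0)"
      unfolding inner_vec_def inner_real_def psi_blk blkS_def by (simp add: sum_distrib_left if_distrib cong: if_cong)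
    also have "\<dots> = (\<Sum>j\<in>UNIV. \<Sum>k\<in>UNIV. if blk k = blk j then a$k * hh t j else 0)"
      by (subst sum.swap) (intro sum.cong refl, auto)
    also have "\<dots> = (\<Sum>j\<in>UNIV. c (blk j) * hh t j)"
      unfolding c_def sum_distrib_right by (intro sum.cong refl) auto
    finally show ?thesis .
  qed
  define K0 where "K0 = (\<Sum>j\<in>UNIV. (\<Sum>l\<in>UNIV. G$j$l)\<^sup>2)"
  have K00: "0 \<le> K0" unfolding K0_def by (simp add: sum_nonneg)
  have hhK: "(\<Sum>j\<in>UNIV. hh t j) \<le> K0" if "t \<in> T" for t
    unfolding K0_def
  proof (rule sum_mono)
    fix j
    have "(\<Sum>l\<in>UNIV. G$j$l * sqrt (t$l)) \<le> (\<Sum>l\<in>UNIV. G$j$l)"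
      using nG Tle1[OF that] by (intro sum_mono) (auto simp: nonneg_mat_def intro!: mult_left_le)
    moreover have "0 \<le> (\<Sum>l\<in>UNIV. G$j$l * sqrt (t$l))"
      using nG that by (auto simp: nonneg_mat_def T_def intro!: sum_nonneg)
    ultimately have "(\<Sum>l\<in>UNIV. G$j$l * sqrt (t$l))\<^sup>2 \<le> (\<Sum>l\<in>UNIV. G$j$l)\<^sup>2" by (simp add: power_mono)
    moreover have "0 \<le> t$j" using that by (simp add: T_def)
    ultimately show "hh t j \<le> (\<Sum>l\<in>UNIV. G$j$l)\<^sup>2" by (simp add: hh_def)
  qed
  define e where "e = - b / (2 * (K0 + 1))"
  have e0: "0 < e" using b0 K00 unfolding e_def by (intro divide_pos_pos) auto
  have eK: "e * K0 \<le> - b / 2"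
  proof -
    have "e * K0 = (- b / 2) * (K0 / (K0 + 1))" unfolding e_def using K00 by (simp add: field_simps)
    also have "\<dots> \<le> (- b / 2) * 1" using b0 K00 by (intro mult_left_mono) auto
    finally show ?thesis by simp
  qed
  define d where "d = (\<lambda>bb. c bb + e)"
  have dpos: "\<forall>bb. 0 < d bb" using c0 e0 by (simp add: d_def add_nonneg_pos)
  have onT: "(\<Sum>j\<in>UNIV. d (blk j) * hh t j) < 0" if tT: "t \<in> T" for t
  proof -
    have "psi t \<in> K" unfolding K_def using tT by (intro hull_inc) blast
    hence "inner a (psi t) < b" using aK by blast
    hence "(\<Sum>j\<in>UNIV. c (blk j) * hh t j) < b" using apsi by simp
    moreover have "e * (\<Sum>j\<in>UNIV. hh t j) \<le> e * K0" using hhK[OF tT] e0 by (simp add: mult_left_mono)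
    moreover have "(\<Sum>j\<in>UNIV. d (blk j) * hh t j) = (\<Sum>j\<in>UNIV. c (blk j) * hh t j) + e * (\<Sum>j\<in>UNIV. hh t j)"
      by (simp add: d_def algebra_simps sum.distrib sum_distrib_left)
    ultimately show ?thesis using eK b0 by linarith
  qed
  show ?thesis
  proof (intro exI conjI allI impI)
    show "\<And>bb. 0 < d bb" using dpos by blast
  next
    fix om :: "real^'q" assume on: "\<forall>k. 0 \<le> om$k" and o0: "om \<noteq> 0"
    define s where "s = (\<Sum>k\<in>UNIV. (om$k)\<^sup>2)"
    have s0: "0 < s"
    proof -
      obtain k where "om$k \<noteq> 0" using o0 by (auto simp: vec_eq_iff)
      hence "0 < (om$k)\<^sup>2" by simp
      moreover have "(om$k)\<^sup>2 \<le> s" unfolding s_def by (rule member_le_sum) auto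
      ultimately show ?thesis by linarith
    qed
    define t where "t = (\<chi> k. (om$k)\<^sup>2 / s)"
    have tT: "t \<in> T" using s0 by (simp add: T_def t_def inner_vec_def sum_divide_distrib[symmetric] s_def)
    have sq: "sqrt (t$l) = om$l / sqrt s" for l
      using on s0 by (simp add: t_def real_sqrt_divide)
    have "hh t j = (((G *v om)$j)\<^sup>2 - (om$j)\<^sup>2) / s" for j
    proof -
      have "(\<Sum>l\<in>UNIV. G$j$l * sqrt (t$l)) = (G *v om)$j / sqrt s"
        unfolding sq by (simp add: matrix_vector_mult_def sum_divide_distrib)
      thus ?thesis using s0 by (simp add: hh_def t_def power_divide diff_divide_distrib)
    qed
    hence "(\<Sum>j\<in>UNIV. d (blk j) * hh t j) = (\<Sum>j\<in>UNIV. d (blk j) * ((G *v om)$j)\<^sup>2 - d (blk j) * (om$j)\<^sup>2) / s"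
      by (simp add: sum_divide_distrib algebra_simps)
    hence "(\<Sum>j\<in>UNIV. d (blk j) * ((G *v om)$j)\<^sup>2 - d (blk j) * (om$j)\<^sup>2) / s < 0" using onT[OF tT] by simp
    hence "(\<Sum>j\<in>UNIV. d (blk j) * ((G *v om)$j)\<^sup>2 - d (blk j) * (om$j)\<^sup>2) < 0" using s0 by (simp add: divide_less_0_iff)
    thus "(\<Sum>k\<in>UNIV. d (blk k) * ((G *v om)$k)\<^sup>2) < (\<Sum>k\<in>UNIV. d (blk k) * (om$k)\<^sup>2)"
      by (simp add: sum_subtractf)
  qed
qed

lemma vm_sandwich:
  fixes D :: "real^'q^'q"
  assumes "transpose D = D"
  shows "x v* (transpose M ** D ** N) = transpose N *v (D *v (M *v x))"
  by (simp add: assms matrix_transpose_mul matrix_vector_mul_assoc flip: transpose_matrix_vector)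

lemma diag_transpose: "transpose ((\<chi> i j. if i = j then dd i else 0) :: real^'q^'q) = (\<chi> i j. if i = j then dd i else 0)"
  by (simp add: transpose_def vec_eq_iff)

lemma nu_exists:
  fixes G :: "real^'q^'q" and dd :: "'q \<Rightarrow> real"
  defines "D \<equiv> (\<chi> i j. if i = j then dd i else 0) :: real^'q^'q"
  assumes q: "\<And>om. \<forall>k. 0 \<le> om$k \<Longrightarrow> om \<noteq> 0 \<Longrightarrow>
       (\<Sum>k\<in>UNIV. dd k * ((G *v om)$k)\<^sup>2) < (\<Sum>k\<in>UNIV. dd k * (om$k)\<^sup>2)"
  shows "\<exists>nu. pos_vec nu \<and> neg_vec ((transpose G ** D ** G - D) *v nu)"
proof (rule ccontr)
  assume "\<not> ?thesis"
  from gordan[OF this] obtain y where yn: "\<forall>i. 0 \<le> y$i" and y0: "y \<noteq> 0"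
    and yM: "\<forall>j. 0 \<le> (y v* (transpose G ** D ** G - D))$j" by blast
  have "0 \<le> inner (y v* (transpose G ** D ** G - D)) y"
    unfolding inner_vec_def inner_real_def using yM yn by (auto intro!: sum_nonneg)
  also have "inner (y v* (transpose G ** D ** G - D)) y = inner y ((transpose G ** D ** G - D) *v y)"
    by (rule dot_lmul_matrix)
  also have "\<dots> = inner (G *v y) (D *v (G *v y)) - inner y (D *v y)"
    by (simp add: matrix_vector_mult_diff_rdistrib inner_diff_right matrix_vector_mul_assoc[symmetric]
        inner_transpose_mv del: transpose_matrix_vector)
  also have "\<dots> = (\<Sum>k\<in>UNIV. dd k * ((G *v y)$k)\<^sup>2) - (\<Sum>k\<in>UNIV. dd k * (y$k)\<^sup>2)"
    unfolding D_def diag_mv inner_vec_def inner_real_def by (simp add: power2_eq_square algebra_simps)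
  finally show False using q[OF yn y0] by simp
qed

lemma mv_lneg: "(- (M::real^'n^'m)) *v x = - (M *v x)"
  by (simp add: vec_eq_iff matrix_vector_mult_def sum_negf)

lemma transpose_neg: "transpose (- M) = - transpose (M::real^'n^'m)"
  by (simp add: transpose_def vec_eq_iff)

lemma pos_from_neg1:
  fixes B :: "real^'n^'n"
  assumes mB: "metzler B" and zn: "\<forall>i. 0 \<le> z$i" and Bz: "B *v z = - vec 1"
  shows "pos_vec z"
  unfolding pos_vec_def
proof
  fix i
  show "0 < z$i"
  proof (rule ccontr)
    assume "\<not> 0 < z$i"
    hence zi: "z$i = 0" using zn[rule_format, of i] by linarith
    have "(B *v z)$i = B$i$i * z$i + (\<Sum>j\<in>UNIV - {i}. B$i$j * z$j)"
      by (simp add: matrix_vector_mult_def sum.remove[of UNIV i])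
    also have "\<dots> \<ge> 0" using zi zn mB by (auto simp: metzler_def intro!: sum_nonneg mult_nonneg_nonneg)
    finally show False using Bz by simp
  qed
qed

lemma nonneg_mv: "nonneg_mat M \<Longrightarrow> \<forall>i. 0 \<le> x$i \<Longrightarrow> 0 \<le> (M *v x)$j"
  by (auto simp: nonneg_mat_def matrix_vector_mult_def intro!: sum_nonneg)

lemma nonneg_mm: "nonneg_mat M \<Longrightarrow> nonneg_mat N \<Longrightarrow> nonneg_mat (M ** N)"
  by (auto simp: nonneg_mat_def matrix_matrix_mult_def intro!: sum_nonneg)

lemma nonneg_add: "nonneg_mat M \<Longrightarrow> nonneg_mat N \<Longrightarrow> nonneg_mat (M + N)"
  by (auto simp: nonneg_mat_def)

lemma nonneg_transpose: "nonneg_mat M \<Longrightarrow> nonneg_mat (transpose M)"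
  by (auto simp: nonneg_mat_def transpose_def)

lemma vm_diff: "(x::real^'m) v* (M - N) = x v* M - x v* N"
  by (simp add: vec_eq_iff vector_matrix_mult_def sum_subtractf algebra_simps)

lemma small_eps:
  fixes m q :: "real^'q"
  assumes "neg_vec m"
  shows "\<exists>e>0. neg_vec (m + e *\<^sub>R q)"
proof -
  define R where "R = (\<lambda>k. - m$k / (\<bar>q$k\<bar> + 1)) ` UNIV"
  define e where "e = Min R"
  have fR: "finite R" "R \<noteq> {}" by (auto simp: R_def)
  have mneg: "\<And>k. m$k < 0" using assms by (simp add: neg_vec_def)
  have "e \<in> R" unfolding e_def using Min_in[OF fR] .
  then obtain k0 where "e = - m$k0 / (\<bar>q$k0\<bar> + 1)" unfolding R_def by blast
  moreover have "0 < - m$k0 / (\<bar>q$k0\<bar> + 1)" using mneg[of k0] by (intro divide_pos_pos) auto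
  ultimately have e0: "0 < e" by simp
  have ele: "e \<le> - m$k / (\<bar>q$k\<bar> + 1)" for k unfolding e_def R_def by (rule Min_le) auto
  have "m$k + e * q$k < 0" for k
  proof -
    have p: "0 < \<bar>q$k\<bar> + 1" by simp
    have h1: "e * (\<bar>q$k\<bar> + 1) \<le> - m$k" using ele[of k] pos_le_divide_eq[OF p, of e "- m$k"] by linarith
    have h2: "e * q$k \<le> e * \<bar>q$k\<bar>" using e0 by (simp add: mult_left_mono)
    have h3: "e * (\<bar>q$k\<bar> + 1) = e * \<bar>q$k\<bar> + e" by (simp add: algebra_simps)
    show ?thesis using h1 h2 h3 e0 by linarith
  qed
  thus ?thesis using e0 by (auto simp: neg_vec_def)
qed

lemma nec:
  fixes A :: "real^'n^'n" and E :: "real^'q^'n" and C :: "real^'n^'q" and F :: "real^'q^'q"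
    and blk :: "'q \<Rightarrow> 'b"
  assumes rs: "robustly_stable blk A E C F" and mA: "metzler A" and nE: "nonneg_mat E"
    and nC: "nonneg_mat C" and nF: "nonneg_mat F"
  shows "\<exists>(lam::real^'n) (mu::real^'n) (nu::real^'q) D.
       pos_vec lam \<and> pos_vec mu \<and> pos_vec nu \<and> D \<in> D_Delta blk \<and>
       neg_vec (A *v lam + E *v nu) \<and>
       neg_vec (lam v* (transpose C ** D ** C) + nu v* (transpose F ** D ** C) + mu v* A) \<and>
       neg_vec (lam v* (transpose C ** D ** F) + nu v* (transpose F ** D ** F - D) + mu v* E)"
proof -
  obtain P where nP: "nonneg_mat P" and AP: "A ** P = - mat 1" and PA: "P ** A = - mat 1"
    using inv_lemma[OF rs mA] by blast
  define X where "X = P ** E"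
  have nX: "nonneg_mat X" unfolding X_def by (rule nonneg_mm[OF nP nE])
  have AX: "A ** X = - E" unfolding X_def by (simp add: matrix_mul_assoc AP mm_lneg)
  define G where "G = F + C ** X"
  have nG: "nonneg_mat G" unfolding G_def by (rule nonneg_add[OF nF nonneg_mm[OF nC nX]])
  have ng: "\<And>om. \<forall>k. 0 \<le> om$k \<Longrightarrow> om \<noteq> 0 \<Longrightarrow>
       \<exists>k. blkS blk (\<lambda>j. ((G *v om)$j)\<^sup>2) (blk k) < blkS blk (\<lambda>j. (om$j)\<^sup>2) (blk k)"
    unfolding G_def by (rule no_gain[OF rs AX nG[unfolded G_def]])
  obtain d where dpos: "\<forall>b. 0 < d b" and dq: "\<forall>om. (\<forall>k. 0 \<le> om$k) \<longrightarrow> om \<noteq> 0 \<longrightarrow>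
       (\<Sum>k\<in>UNIV. d (blk k) * ((G *v om)$k)\<^sup>2) < (\<Sum>k\<in>UNIV. d (blk k) * (om$k)\<^sup>2)"
    using slemma[OF nG ng] by blast
  define D :: "real^'q^'q" where "D = (\<chi> i j. if i = j then d (blk i) else 0)"
  have DD: "D \<in> D_Delta blk" unfolding D_Delta_def D_def using dpos by blast
  have TD: "transpose D = D" unfolding D_def by (rule diag_transpose)
  have nD: "nonneg_mat D" using dpos by (auto simp: D_def nonneg_mat_def less_imp_le)
  obtain nu where np: "pos_vec nu" and Mneg: "neg_vec ((transpose G ** D ** G - D) *v nu)"
    using nu_exists[where dd="\<lambda>k. d (blk k)" and G=G] dq unfolding D_def by blast
  define l0 where "l0 = P *v vec 1"
  define m0 where "m0 = transpose P *v vec 1"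
  have Al0: "A *v l0 = - vec 1" by (simp add: l0_def matrix_vector_mul_assoc AP mv_lneg)
  have Am0: "transpose A *v m0 = - vec 1"
  proof -
    have "transpose A ** transpose P = - mat 1" by (simp add: matrix_transpose_mul[symmetric] PA transpose_neg transpose_mat)
    thus ?thesis by (simp add: m0_def matrix_vector_mul_assoc mv_lneg del: transpose_matrix_vector)
  qed
  have v1n: "\<forall>i. 0 \<le> (vec 1 :: real^'n)$i" by simp
  have lp0: "pos_vec l0"
    by (rule pos_from_neg1[OF mA _ Al0]) (unfold l0_def, use nonneg_mv[OF nP v1n] in blast)
  have mp0: "pos_vec m0"
    by (rule pos_from_neg1[OF metzler_transpose[OF mA] _ Am0]) (unfold m0_def, use nonneg_mv[OF nonneg_transpose[OF nP] v1n] in blast)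
  define Mv where "Mv = (transpose G ** D ** G - D) *v nu"
  define qv where "qv = transpose G *v (D *v (C *v l0)) + transpose E *v m0"
  obtain e where e0: "0 < e" and eneg: "neg_vec (Mv + e *\<^sub>R qv)"
    using small_eps[OF Mneg[folded Mv_def], of qv] by blast
  define lam where "lam = X *v nu + e *\<^sub>R l0"
  define y where "y = C *v lam + F *v nu"
  define w where "w = transpose C *v (D *v y)"
  define mu where "mu = transpose P *v w + e *\<^sub>R m0"
  have nun: "\<forall>i. 0 \<le> nu$i" using np by (auto simp: pos_vec_def less_imp_le)
  have lamp: "pos_vec lam" unfolding pos_vec_def
  proof
    fix i
    have "0 \<le> (X *v nu)$i" by (rule nonneg_mv[OF nX nun])
    moreover have "0 < l0$i" using lp0 by (simp add: pos_vec_def)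
    ultimately show "0 < lam$i" using e0 by (simp add: lam_def add_nonneg_pos)
  qed
  have lamn: "\<forall>i. 0 \<le> lam$i" using lamp by (auto simp: pos_vec_def less_imp_le)
  have yn: "\<forall>i. 0 \<le> y$i" unfolding y_def using nonneg_mv[OF nC lamn] nonneg_mv[OF nF nun] by simp
  have wn: "\<forall>i. 0 \<le> w$i" unfolding w_def
    by (intro allI nonneg_mv[OF nonneg_transpose[OF nC]] nonneg_mv[OF nD yn])
  have mup: "pos_vec mu" unfolding pos_vec_def
  proof
    fix i
    have "0 \<le> (transpose P *v w)$i" by (rule nonneg_mv[OF nonneg_transpose[OF nP] wn])
    moreover have "0 < m0$i" using mp0 by (simp add: pos_vec_def)
    ultimately show "0 < mu$i" using e0 by (simp add: mu_def add_nonneg_pos)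
  qed
  have c1: "A *v lam + E *v nu = - (e *\<^sub>R vec 1)"
    by (simp add: lam_def matrix_vector_right_distrib matrix_vector_mult_scaleR matrix_vector_mul_assoc AX mv_lneg Al0)
  have ATmu: "transpose A *v mu = - w - e *\<^sub>R vec 1"
  proof -
    have "transpose A ** transpose P = - mat 1" by (simp add: matrix_transpose_mul[symmetric] PA transpose_neg transpose_mat)
    thus ?thesis by (simp add: mu_def matrix_vector_right_distrib matrix_vector_mult_scaleR matrix_vector_mul_assoc Am0 mv_lneg del: transpose_matrix_vector)
  qed
  have r1: "lam v* (transpose C ** D ** C) + nu v* (transpose F ** D ** C) + mu v* A = - (e *\<^sub>R vec 1)"
  proof -
    have "lam v* (transpose C ** D ** C) + nu v* (transpose F ** D ** C) + mu v* A
        = transpose C *v (D *v (C *v lam)) + transpose C *v (D *v (F *v nu)) + transpose A *v mu"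
      unfolding vm_sandwich[OF TD] by simp
    also have "\<dots> = w + transpose A *v mu"
      by (simp add: w_def y_def matrix_vector_right_distrib del: transpose_matrix_vector)
    finally show ?thesis using ATmu by simp
  qed
  have ETmu: "transpose E *v mu = transpose X *v w + e *\<^sub>R (transpose E *v m0)"
    by (simp add: mu_def X_def matrix_vector_right_distrib matrix_vector_mult_scaleR matrix_vector_mul_assoc matrix_transpose_mul del: transpose_matrix_vector)
  have r2: "lam v* (transpose C ** D ** F) + nu v* (transpose F ** D ** F - D) + mu v* E = Mv + e *\<^sub>R qv"
  proof -
    have "lam v* (transpose C ** D ** F) + nu v* (transpose F ** D ** F - D) + mu v* E
        = transpose F *v (D *v (C *v lam)) + (transpose F *v (D *v (F *v nu)) - D *v nu) + transpose E *v mu"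
    proof -
      have "nu v* D = D *v nu" by (metis TD transpose_matrix_vector)
      thus ?thesis unfolding vm_diff vm_sandwich[OF TD] by simp
    qed
    also have "\<dots> = transpose F *v (D *v y) + transpose X *v w - D *v nu + e *\<^sub>R (transpose E *v m0)"
      by (simp add: ETmu y_def matrix_vector_right_distrib algebra_simps del: transpose_matrix_vector)
    also have "transpose X *v w = transpose (C ** X) *v (D *v y)"
      by (simp add: w_def matrix_vector_mul_assoc matrix_transpose_mul matrix_mul_assoc del: transpose_matrix_vector)
    also have "transpose F *v (D *v y) + transpose (C ** X) *v (D *v y) = transpose G *v (D *v y)"
    proof -
      have "transpose G = transpose F + transpose (C ** X)" by (simp add: G_def transpose_def vec_eq_iff)
      thus ?thesis by (simp add: matrix_vector_mult_add_rdistrib del: transpose_matrix_vector)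
    qed
    also have "y = G *v nu + e *\<^sub>R (C *v l0)"
      by (simp add: y_def lam_def G_def matrix_vector_right_distrib matrix_vector_mult_scaleR
          matrix_vector_mult_add_rdistrib matrix_vector_mul_assoc algebra_simps)
    finally show ?thesis
      by (simp add: Mv_def qv_def matrix_vector_mult_diff_rdistrib matrix_vector_right_distrib
          matrix_vector_mult_scaleR matrix_vector_mul_assoc[symmetric] algebra_simps del: transpose_matrix_vector)
  qed
  have "neg_vec (- (e *\<^sub>R vec 1 :: real^'n))" using e0 by (simp add: neg_vec_def)
  hence "neg_vec (A *v lam + E *v nu)" "neg_vec (lam v* (transpose C ** D ** C) + nu v* (transpose F ** D ** C) + mu v* A)"
    using c1 r1 by simp_all
  moreover have "neg_vec (lam v* (transpose C ** D ** F) + nu v* (transpose F ** D ** F - D) + mu v* E)"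
    using r2 eneg by simp
  ultimately show ?thesis using lamp mup np DD by blast
qed



theorem theorem3:
  fixes A :: "real^'n^'n" and E :: "real^'q^'n" and C :: "real^'n^'q"
    and F :: "real^'q^'q" and blk :: "'q \<Rightarrow> 'b"
  assumes "metzler A" and "nonneg_mat E" and "nonneg_mat C" and "nonneg_mat F"
  shows "robustly_stable blk A E C F \<longleftrightarrow>
    (\<exists>(lam::real^'n) (mu::real^'n) (nu::real^'q) D.
       pos_vec lam \<and> pos_vec mu \<and> pos_vec nu \<and> D \<in> D_Delta blk \<and>
       neg_vec (A *v lam + E *v nu) \<and>
       neg_vec (lam v* (transpose C ** D ** C) + nu v* (transpose F ** D ** C) + mu v* A) \<and>
       neg_vec (lam v* (transpose C ** D ** F) + nu v* (transpose F ** D ** F - D) + mu v* E))"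
proof
  assume "robustly_stable blk A E C F"
  thus "\<exists>(lam::real^'n) (mu::real^'n) (nu::real^'q) D.
       pos_vec lam \<and> pos_vec mu \<and> pos_vec nu \<and> D \<in> D_Delta blk \<and>
       neg_vec (A *v lam + E *v nu) \<and>
       neg_vec (lam v* (transpose C ** D ** C) + nu v* (transpose F ** D ** C) + mu v* A) \<and>
       neg_vec (lam v* (transpose C ** D ** F) + nu v* (transpose F ** D ** F - D) + mu v* E)"
    using nec assms by blast
next
  assume "\<exists>(lam::real^'n) (mu::real^'n) (nu::real^'q) D.
       pos_vec lam \<and> pos_vec mu \<and> pos_vec nu \<and> D \<in> D_Delta blk \<and>
       neg_vec (A *v lam + E *v nu) \<and>
       neg_vec (lam v* (transpose C ** D ** C) + nu v* (transpose F ** D ** C) + mu v* A) \<and>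
       neg_vec (lam v* (transpose C ** D ** F) + nu v* (transpose F ** D ** F - D) + mu v* E)"
  thus "robustly_stable blk A E C F" using suff assms by blast
qed

end
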